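(* Let $p$ be a prime and let $T\subset\mathbb{Q}_p$ be a non-empty locally finite set. Then $T$ corresponds to a uniform partition of unity if and only if there exists an integer $n$ such that \[\#\big(B(x,p^n)\cap T\big)=\#\big(B(y,p^n)\cap T\big)\quad\text{for all }x,y\in\mathbb{Q}_p.\]
   Context: $\mathbb{Q}_p$ is the field of $p$-adic numbers with Haar measure normalized so that $\mathbb{Z}_p$ has measure $1$; $B(x,p^n)=\{y\in\mathbb{Q}_p:|x-y|_p\le p^n\}$. A set $T$ is locally finite if its intersection with every compact set is finite. $T$ is said to correspond to a uniform partition of unity if there exists a non-negative function $f\in L^1(\mathbb{Q}_p)$ such that $\sum_{t\in T} f(x-t)=1$ for a.e. $x\in\mathbb{Q}_p$. *)

theory Defs
  imports "HOL-Analysis.Analysis" "HOL-Computational_Algebra.Primes"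
begin

text \<open>A p-adic number x is represented by the
  family of its residues c k = (x mod p^k) for all integers k: c k is the unique element of
  Z[1/p] in [0, p^k) with x - c k in p^k Z_p.  Compatibility: c (k+1) - c k in p^k Z, and
  c k = 0 for all sufficiently small k (x bounded).\<close>

definition Qp :: "nat \<Rightarrow> (int \<Rightarrow> rat) set" where
  "Qp p = {c. (\<forall>k. 0 \<le> c k \<and> c k < of_nat p powi k)
             \<and> (\<forall>k. (c (k+1) - c k) / of_nat p powi k \<in> \<int>)
             \<and> (\<exists>K. \<forall>k\<le>K. c k = 0)}"

definition pmod :: "nat \<Rightarrow> int \<Rightarrow> rat \<Rightarrow> rat" where
  "pmod p k r = r - of_nat p powi k * of_int \<lfloor>r / of_nat p powi k\<rfloor>"

definition pzero :: "int \<Rightarrow> rat" where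
  "pzero = (\<lambda>k. 0)"

definition padd :: "nat \<Rightarrow> (int \<Rightarrow> rat) \<Rightarrow> (int \<Rightarrow> rat) \<Rightarrow> (int \<Rightarrow> rat)" where
  "padd p x y = (\<lambda>k. pmod p k (x k + y k))"

definition pneg :: "nat \<Rightarrow> (int \<Rightarrow> rat) \<Rightarrow> (int \<Rightarrow> rat)" where
  "pneg p x = (\<lambda>k. pmod p k (- x k))"

definition psub :: "nat \<Rightarrow> (int \<Rightarrow> rat) \<Rightarrow> (int \<Rightarrow> rat) \<Rightarrow> (int \<Rightarrow> rat)" where
  "psub p x y = padd p x (pneg p y)"

text \<open>p-adic absolute value: |x|_p = p^(-v(x)), v(x) = largest k with x in p^k Z_p.\<close>
definition pabs :: "nat \<Rightarrow> (int \<Rightarrow> rat) \<Rightarrow> real" where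
  "pabs p x = (if x = pzero then 0 else real p powi (- (GREATEST k. x k = 0)))"

definition pdist :: "nat \<Rightarrow> (int \<Rightarrow> rat) \<Rightarrow> (int \<Rightarrow> rat) \<Rightarrow> real" where
  "pdist p x y = pabs p (psub p x y)"

definition pball :: "nat \<Rightarrow> (int \<Rightarrow> rat) \<Rightarrow> int \<Rightarrow> (int \<Rightarrow> rat) set" where
  "pball p x n = {y \<in> Qp p. pdist p x y \<le> real p powi n}"

definition Zp :: "nat \<Rightarrow> (int \<Rightarrow> rat) set" where
  "Zp p = {x \<in> Qp p. pabs p x \<le> 1}"

definition ptop :: "nat \<Rightarrow> (int \<Rightarrow> rat) topology" where
  "ptop p = Metric_space.mtopology (Qp p) (pdist p)"

definition is_haar :: "nat \<Rightarrow> (int \<Rightarrow> rat) measure \<Rightarrow> bool" where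
  "is_haar p M \<longleftrightarrow>
     space M = Qp p
   \<and> sets M = sigma_sets (Qp p) {U. openin (ptop p) U}
   \<and> (\<forall>x\<in>Qp p. \<forall>A\<in>sets M. padd p x ` A \<in> sets M \<and> emeasure M (padd p x ` A) = emeasure M A)
   \<and> (\<forall>K. compactin (ptop p) K \<longrightarrow> emeasure M K < \<infinity>)
   \<and> emeasure M (Zp p) = 1"

definition haar :: "nat \<Rightarrow> (int \<Rightarrow> rat) measure" where
  "haar p = (SOME M. is_haar p M)"

definition locally_finite :: "nat \<Rightarrow> (int \<Rightarrow> rat) set \<Rightarrow> bool" where
  "locally_finite p T \<longleftrightarrow> (\<forall>K. compactin (ptop p) K \<longrightarrow> finite (K \<inter> T))"

definition uniform_partition_of_unity :: "nat \<Rightarrow> (int \<Rightarrow> rat) set \<Rightarrow> bool" where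
  "uniform_partition_of_unity p T \<longleftrightarrow>
     (\<exists>f :: (int \<Rightarrow> rat) \<Rightarrow> real.
        integrable (haar p) f \<and> (\<forall>x\<in>Qp p. 0 \<le> f x)
      \<and> (AE x in haar p. ((\<lambda>t. f (psub p x t)) has_sum 1) T))"

end

theory Submission
  imports Defs
begin

abbreviation PP :: "nat \<Rightarrow> int \<Rightarrow> rat" where "PP p k \<equiv> of_nat p powi k"

definition cng :: "nat \<Rightarrow> int \<Rightarrow> rat \<Rightarrow> rat \<Rightarrow> bool" where
  "cng p k a b \<longleftrightarrow> (a - b) / PP p k \<in> \<int>"

lemma PP_pos: "p \<ge> 2 \<Longrightarrow> PP p k > 0" by auto

lemma PP_add: "p \<ge> 2 \<Longrightarrow> PP p (a + b) = PP p a * PP p b"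
  by (simp add: power_int_add)

lemma PP_mono: "p \<ge> 2 \<Longrightarrow> j \<le> k \<Longrightarrow> PP p j \<le> PP p k"
  by (rule power_int_increasing) auto

lemma PP_strict_mono: "p \<ge> 2 \<Longrightarrow> j < k \<Longrightarrow> PP p j < PP p k"
  by (rule power_int_strict_increasing) auto

lemma cng_refl[simp]: "cng p k a a" by (simp add: cng_def)

lemma cng_sym: "cng p k a b \<Longrightarrow> cng p k b a"
proof -
  assume "cng p k a b"
  then have "- ((a - b) / PP p k) \<in> \<int>" unfolding cng_def by (rule Ints_minus)
  moreover have "- ((a - b) / PP p k) = (b - a) / PP p k" by (metis minus_diff_eq minus_divide_left)
  ultimately show ?thesis unfolding cng_def by metis
qed

lemma cng_trans: "cng p k a b \<Longrightarrow> cng p k b c \<Longrightarrow> cng p k a c"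
proof -
  assume "cng p k a b" "cng p k b c"
  then have "(a - b) / PP p k + (b - c) / PP p k \<in> \<int>" unfolding cng_def by (rule Ints_add)
  then show ?thesis unfolding cng_def by (simp add: add_divide_distrib[symmetric])
qed

lemma cng_add: "cng p k a b \<Longrightarrow> cng p k c d \<Longrightarrow> cng p k (a + c) (b + d)"
proof -
  assume "cng p k a b" "cng p k c d"
  then have "(a - b) / PP p k + (c - d) / PP p k \<in> \<int>" unfolding cng_def by (rule Ints_add)
  then show ?thesis unfolding cng_def by (simp add: add_divide_distrib[symmetric] algebra_simps)
qed

lemma cng_minus: "cng p k a b \<Longrightarrow> cng p k (- a) (- b)"
proof -
  assume "cng p k a b"
  then have "- ((a - b) / PP p k) \<in> \<int>" unfolding cng_def by (rule Ints_minus)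
  moreover have "- ((a - b) / PP p k) = (- a - - b) / PP p k" by (simp add: minus_divide_left)
  ultimately show ?thesis unfolding cng_def by metis
qed

lemma cng_mult_PP: "cng p k (a + of_int j * PP p k) a"
  unfolding cng_def
  by (cases "PP p k = 0") auto

lemma cng_down: assumes "p \<ge> 2" "j \<le> k" "cng p k a b" shows "cng p j a b"
proof -
  have "PP p k = PP p j * PP p (k - j)" using assms PP_add[of p j "k-j"] by simp
  moreover have "PP p (k - j) \<in> \<int>" using assms(2)
    by (simp add: power_int_def)
  ultimately have "(a - b) / PP p j = ((a - b) / PP p k) * PP p (k - j)"
    using PP_pos[OF assms(1), of j] PP_pos[OF assms(1), of "k-j"] assms(1) by simp
  then show ?thesis using assms(3) \<open>PP p (k - j) \<in> \<int>\<close> unfolding cng_def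
    by (metis Ints_mult)
qed

lemma pmod_range: assumes "p \<ge> 2" shows "0 \<le> pmod p k r" "pmod p k r < PP p k"
proof -
  have P: "PP p k > 0" using PP_pos[OF assms] .
  have "of_int \<lfloor>r / PP p k\<rfloor> \<le> r / PP p k" by (rule of_int_floor_le)
  then have "PP p k * of_int \<lfloor>r / PP p k\<rfloor> \<le> r" using P by (simp add: le_divide_eq mult.commute)
  then show "0 \<le> pmod p k r" unfolding pmod_def by simp
  then have "r / PP p k < (of_int \<lfloor>r / PP p k\<rfloor> + 1)" by (simp add: floor_le_iff[symmetric])
  then have "r < (of_int \<lfloor>r / PP p k\<rfloor> + 1) * PP p k" using P by (simp add: divide_less_eq)
  then have "r < PP p k * of_int \<lfloor>r / PP p k\<rfloor> + PP p k" by (simp add: algebra_simps)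
  then show "pmod p k r < PP p k" unfolding pmod_def by simp
qed

lemma pmod_cng: assumes "p \<ge> 2" shows "cng p k (pmod p k r) r"
  using PP_pos[OF assms, of k] unfolding cng_def pmod_def by simp

lemma cng_range_eq: assumes "p \<ge> 2" "cng p k a b" "0 \<le> a" "a < PP p k" "0 \<le> b" "b < PP p k"
  shows "a = b"
proof -
  obtain z where z: "(a - b) / PP p k = of_int z" using assms(2) unfolding cng_def by (auto elim: Ints_cases)
  have P: "PP p k > 0" using PP_pos[OF assms(1)] .
  have "a - b = of_int z * PP p k" using z P assms(1) by (simp add: divide_eq_eq)
  moreover have "a - b < PP p k" "a - b > - PP p k" using assms by auto
  ultimately have "of_int z * PP p k < 1 * PP p k" "(-1) * PP p k < of_int z * PP p k" by auto
  then have "of_int z < (1::rat)" "(-1::rat) < of_int z" using P mult_less_cancel_right_pos by blast+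
  then have "z = 0" by linarith
  then show ?thesis using \<open>a - b = of_int z * PP p k\<close> by simp
qed

lemma pmod_eq_iff: assumes "p \<ge> 2" shows "pmod p k a = pmod p k b \<longleftrightarrow> cng p k a b"
proof
  assume "pmod p k a = pmod p k b"
  then show "cng p k a b" using pmod_cng[OF assms, of k a] pmod_cng[OF assms, of k b]
    by (metis cng_sym cng_trans)
next
  assume "cng p k a b"
  then have "cng p k (pmod p k a) (pmod p k b)" using pmod_cng[OF assms, of k a] pmod_cng[OF assms, of k b]
    by (metis cng_sym cng_trans)
  then show "pmod p k a = pmod p k b" using pmod_range[OF assms] cng_range_eq[OF assms] by blast
qed

lemma pmod_id: assumes "p \<ge> 2" "0 \<le> r" "r < PP p k" shows "pmod p k r = r"
  using cng_range_eq[OF assms(1) pmod_cng[OF assms(1)]] pmod_range[OF assms(1)] assms by blast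

lemma pmod_eq_cng: assumes "p \<ge> 2" "0 \<le> b" "b < PP p k" shows "pmod p k a = b \<longleftrightarrow> cng p k a b"
  using pmod_eq_iff[OF assms(1), of k a b] pmod_id[OF assms] by simp

lemma Greatest_int:
  fixes P :: "int \<Rightarrow> bool"
  assumes "P a" "\<And>k. P k \<Longrightarrow> k \<le> b"
  shows "P (GREATEST k. P k)" "\<And>k. P k \<Longrightarrow> k \<le> (GREATEST k. P k)"
proof -
  let ?S = "{k. P k \<and> a \<le> k}"
  have fin: "finite ?S" by (rule finite_subset[of _ "{a..b}"]) (use assms in auto)
  have ne: "a \<in> ?S" using assms by auto
  define m where "m = Max ?S"
  have mS: "m \<in> ?S" unfolding m_def using fin ne Max_in by blast
  have ub: "\<And>k. P k \<Longrightarrow> k \<le> m"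
  proof -
    fix k assume "P k"
    show "k \<le> m"
    proof (cases "a \<le> k")
      case True then show ?thesis using \<open>P k\<close> fin unfolding m_def by (auto intro: Max_ge)
    next
      case False then show ?thesis using mS by auto
    qed
  qed
  have G: "(GREATEST k. P k) = m" by (rule Greatest_equality) (use mS ub in auto)
  show "P (GREATEST k. P k)" using G mS by simp
  show "\<And>k. P k \<Longrightarrow> k \<le> (GREATEST k. P k)" using G ub by simp
qed

lemma QpD:
  assumes "y \<in> Qp p"
  shows "0 \<le> y k" "y k < PP p k" "cng p k (y (k+1)) (y k)" "\<exists>K. \<forall>k\<le>K. y k = 0"
  using assms unfolding Qp_def cng_def by auto

lemma QpI:
  assumes "\<And>k. 0 \<le> y k" "\<And>k. y k < PP p k" "\<And>k. cng p k (y (k+1)) (y k)" "\<exists>K. \<forall>k\<le>K. y k = 0"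
  shows "y \<in> Qp p"
  using assms unfolding Qp_def cng_def by auto

lemma Qp_cng:
  assumes "p \<ge> 2" "y \<in> Qp p" "j \<le> k"
  shows "cng p j (y k) (y j)"
  using assms(3)
proof (induction k rule: int_ge_induct)
  case base then show ?case by simp
next
  case (step k)
  have "cng p j (y (k+1)) (y k)"
    using cng_down[OF assms(1) step(1) QpD(3)[OF assms(2)]] .
  then show ?case using step(2) cng_trans by blast
qed

lemma Qp_res:
  assumes "p \<ge> 2" "y \<in> Qp p" "j \<le> k"
  shows "y j = pmod p j (y k)"
proof -
  have "pmod p j (y k) = y j" using pmod_eq_cng[OF assms(1) QpD(1,2)[OF assms(2)]] Qp_cng[OF assms] by blast
  then show ?thesis by simp
qed

lemma agree_down:
  assumes "p \<ge> 2" "y \<in> Qp p" "z \<in> Qp p" "j \<le> k" "y k = z k"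
  shows "y j = z j"
  using Qp_res[OF assms(1,2,4)] Qp_res[OF assms(1,3,4)] assms(5) by simp

lemma pzero_Qp: "p \<ge> 2 \<Longrightarrow> pzero \<in> Qp p"
  by (rule QpI) (auto simp: pzero_def)

lemma pmod_Qp:
  assumes "p \<ge> 2" "\<And>k. cng p k (s (k+1)) (s k)" "\<exists>K. \<forall>k\<le>K. s k = 0"
  shows "(\<lambda>k. pmod p k (s k)) \<in> Qp p"
proof (rule QpI)
  fix k
  show "0 \<le> pmod p k (s k)" "pmod p k (s k) < PP p k" using pmod_range[OF assms(1)] by auto
  have "cng p k (pmod p (k+1) (s (k+1))) (s (k+1))"
    using cng_down[OF assms(1) _ pmod_cng[OF assms(1)]] by simp
  then show "cng p k (pmod p (k + 1) (s (k + 1))) (pmod p k (s k))"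
    using assms(2) pmod_cng[OF assms(1), of k "s k"] by (meson cng_sym cng_trans)
next
  obtain K where "\<forall>k\<le>K. s k = 0" using assms(3) by blast
  then show "\<exists>K. \<forall>k\<le>K. pmod p k (s k) = 0" by (intro exI[of _ K]) (simp add: pmod_def)
qed

lemma padd_Qp:
  assumes "p \<ge> 2" "x \<in> Qp p" "y \<in> Qp p"
  shows "padd p x y \<in> Qp p"
  unfolding padd_def
proof (rule pmod_Qp[OF assms(1)])
  show "\<And>k. cng p k (x (k + 1) + y (k + 1)) (x k + y k)"
    using QpD(3) assms cng_add by blast
  obtain K1 K2 where "\<forall>k\<le>K1. x k = 0" "\<forall>k\<le>K2. y k = 0" using QpD(4) assms by metis
  then show "\<exists>K. \<forall>k\<le>K. x k + y k = 0" by (intro exI[of _ "min K1 K2"]) auto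
qed

lemma pneg_Qp:
  assumes "p \<ge> 2" "x \<in> Qp p"
  shows "pneg p x \<in> Qp p"
  unfolding pneg_def
proof (rule pmod_Qp[OF assms(1)])
  show "\<And>k. cng p k (- x (k + 1)) (- x k)"
    using QpD(3) assms cng_minus by blast
  obtain K1 where "\<forall>k\<le>K1. x k = 0" using QpD(4) assms by metis
  then show "\<exists>K. \<forall>k\<le>K. - x k = 0" by (intro exI[of _ K1]) auto
qed

lemma psub_Qp: "p \<ge> 2 \<Longrightarrow> x \<in> Qp p \<Longrightarrow> y \<in> Qp p \<Longrightarrow> psub p x y \<in> Qp p"
  unfolding psub_def using padd_Qp pneg_Qp by blast

lemma Qp_eqI:
  assumes "p \<ge> 2" "x \<in> Qp p" "y \<in> Qp p" "\<And>k. cng p k (x k) (y k)"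
  shows "x = y"
proof
  fix k show "x k = y k" using cng_range_eq[OF assms(1) assms(4)] QpD[OF assms(2)] QpD[OF assms(3)] by blast
qed

lemma psub_cng: assumes "p \<ge> 2" shows "cng p k (psub p x y k) (x k - y k)"
proof -
  have 1: "cng p k (psub p x y k) (x k + pmod p k (- y k))"
    unfolding psub_def padd_def pneg_def by (rule pmod_cng[OF assms])
  have 2: "cng p k (x k + pmod p k (- y k)) (x k + - y k)"
    by (rule cng_add[OF cng_refl pmod_cng[OF assms]])
  show ?thesis using cng_trans[OF 1 2] by simp
qed

lemma padd_cng: "p \<ge> 2 \<Longrightarrow> cng p k (padd p x y k) (x k + y k)"
  unfolding padd_def using pmod_cng by blast

lemma pneg_cng: "p \<ge> 2 \<Longrightarrow> cng p k (pneg p x k) (- x k)"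
  unfolding pneg_def using pmod_cng by blast

lemma psub_zero_cng:
  assumes "p \<ge> 2"
  shows "psub p x y k = 0 \<longleftrightarrow> cng p k (x k) (y k)"
proof -
  have r: "0 \<le> psub p x y k" "psub p x y k < PP p k"
    unfolding psub_def padd_def using pmod_range[OF assms] by auto
  have "psub p x y k = 0 \<longleftrightarrow> cng p k (psub p x y k) 0"
  proof
    assume "cng p k (psub p x y k) 0"
    then show "psub p x y k = 0" using cng_range_eq[OF assms, of k "psub p x y k" 0] r PP_pos[OF assms, of k] by simp
  qed simp
  also have "\<dots> \<longleftrightarrow> cng p k (x k - y k) 0" using psub_cng[OF assms] by (meson cng_sym cng_trans)
  also have "\<dots> \<longleftrightarrow> cng p k (x k) (y k)" by (simp add: cng_def)
  finally show ?thesis .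
qed

lemma psub_zero_iff:
  assumes "p \<ge> 2" "x \<in> Qp p" "y \<in> Qp p"
  shows "psub p x y k = 0 \<longleftrightarrow> x k = y k"
proof -
  have "psub p x y k = 0 \<longleftrightarrow> cng p k (x k) (y k)" by (rule psub_zero_cng[OF assms(1)])
  also have "\<dots> \<longleftrightarrow> x k = y k" using cng_range_eq[OF assms(1)] QpD[OF assms(2)] QpD[OF assms(3)] by auto
  finally show ?thesis .
qed

lemma Qp_zero_iff: "p \<ge> 2 \<Longrightarrow> z \<in> Qp p \<Longrightarrow> z = pzero \<longleftrightarrow> (\<forall>k. z k = 0)"
  by (auto simp: pzero_def)

lemma pabs_le_iff:
  assumes "p \<ge> 2" "z \<in> Qp p"
  shows "pabs p z \<le> real p powi n \<longleftrightarrow> z (- n) = 0"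
proof (cases "z = pzero")
  case True then show ?thesis by (auto simp: pabs_def pzero_def)
next
  case False
  then obtain k0 where k0: "z k0 \<noteq> 0" by (auto simp: pzero_def)
  have bnd: "\<And>k. z k = 0 \<Longrightarrow> k \<le> k0"
  proof (rule ccontr)
    fix k assume "z k = 0" "\<not> k \<le> k0"
    then have "z k0 = pzero k0" using agree_down[OF assms(1,2) pzero_Qp[OF assms(1)], of k0 k] by (simp add: pzero_def)
    then show False using k0 by (simp add: pzero_def)
  qed
  obtain K where K: "\<forall>k\<le>K. z k = 0" using QpD(4)[OF assms(2)] by blast
  define G where "G = (GREATEST k. z k = 0)"
  have G1: "z G = 0" and G2: "\<And>k. z k = 0 \<Longrightarrow> k \<le> G"
    using Greatest_int[of "\<lambda>k. z k = 0" K k0] K bnd unfolding G_def by auto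
  have "pabs p z = real p powi (- G)" using False by (simp add: pabs_def G_def)
  also have "\<dots> \<le> real p powi n \<longleftrightarrow> - G \<le> n"
  proof
    assume "real p powi (- G) \<le> real p powi n"
    moreover have "n < - G \<Longrightarrow> real p powi n < real p powi (- G)"
      using assms(1) by (intro power_int_strict_increasing) auto
    ultimately show "- G \<le> n" by linarith
  next
    assume "- G \<le> n" then show "real p powi (- G) \<le> real p powi n" using assms(1) by (intro power_int_increasing) auto
  qed
  also have "\<dots> \<longleftrightarrow> z (- n) = 0"
  proof
    assume "- G \<le> n"
    then show "z (- n) = 0" using agree_down[OF assms(1,2) pzero_Qp[OF assms(1)], of "-n" G] G1 by (simp add: pzero_def)
  next
    assume "z (- n) = 0" then show "- G \<le> n" using G2 by fastforce
  qed
  finally show ?thesis .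
qed

lemma pabs_cases: "pabs p z = 0 \<or> (\<exists>n. pabs p z = real p powi n)"
  by (auto simp: pabs_def)

lemma pdist_le_iff:
  assumes "p \<ge> 2" "x \<in> Qp p" "y \<in> Qp p"
  shows "pdist p x y \<le> real p powi n \<longleftrightarrow> x (- n) = y (- n)"
  unfolding pdist_def using pabs_le_iff[OF assms(1) psub_Qp[OF assms]] psub_zero_iff[OF assms] by simp

lemma pabs_zero_iff: "p \<ge> 2 \<Longrightarrow> pabs p z = 0 \<longleftrightarrow> z = pzero"
  by (auto simp: pabs_def)

lemma pdist_zero_iff:
  assumes "p \<ge> 2" "x \<in> Qp p" "y \<in> Qp p"
  shows "pdist p x y = 0 \<longleftrightarrow> x = y"
proof -
  have "pdist p x y = 0 \<longleftrightarrow> (\<forall>k. psub p x y k = 0)" unfolding pdist_def using pabs_zero_iff[OF assms(1)]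
    by (auto simp: pzero_def)
  also have "\<dots> \<longleftrightarrow> x = y" using psub_zero_iff[OF assms] by auto
  finally show ?thesis .
qed

lemma pdist_nonneg: "p \<ge> 2 \<Longrightarrow> 0 \<le> pdist p x y"
  by (auto simp: pdist_def pabs_def)

lemma pdist_cases: "pdist p x y = 0 \<or> (\<exists>n. pdist p x y = real p powi n)"
  unfolding pdist_def by (rule pabs_cases)

lemma pabs_cong: assumes "\<And>k. z k = 0 \<longleftrightarrow> w k = 0" shows "pabs p z = pabs p w"
proof -
  have e: "(\<lambda>k. z k = 0) = (\<lambda>k. w k = 0)" using assms by auto
  have "z = pzero \<longleftrightarrow> w = pzero" using assms by (auto simp: pzero_def fun_eq_iff)
  then show ?thesis unfolding pabs_def e by simp
qed

lemma pdist_sym_gen: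
  assumes "p \<ge> 2"
  shows "pdist p x y = pdist p y x"
  unfolding pdist_def by (rule pabs_cong) (use psub_zero_cng[OF assms] cng_sym in blast)

lemma pdist_sym_old:
  assumes "p \<ge> 2" "x \<in> Qp p" "y \<in> Qp p"
  shows "pdist p x y = pdist p y x"
proof -
  have le: "\<And>n. pdist p x y \<le> real p powi n \<longleftrightarrow> pdist p y x \<le> real p powi n"
    using pdist_le_iff[OF assms] pdist_le_iff[OF assms(1,3,2)] by auto
  have z: "pdist p x y = 0 \<longleftrightarrow> pdist p y x = 0"
    using pdist_zero_iff[OF assms] pdist_zero_iff[OF assms(1,3,2)] by auto
  show ?thesis
  proof (cases "pdist p x y = 0")
    case True then show ?thesis using z by simp
  next
    case False
    then have F2: "pdist p y x \<noteq> 0" using z by simp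
    obtain n where n: "pdist p x y = real p powi n" using False pdist_cases[of p x y] by blast
    obtain m where m: "pdist p y x = real p powi m" using F2 pdist_cases[of p y x] by blast
    have "pdist p y x \<le> pdist p x y" using le[of n] n by simp
    moreover have "pdist p x y \<le> pdist p y x" using le[of m] m by simp
    ultimately show ?thesis by simp
  qed
qed

lemma pdist_triangle:
  assumes "p \<ge> 2" "x \<in> Qp p" "y \<in> Qp p" "z \<in> Qp p"
  shows "pdist p x z \<le> pdist p x y + pdist p y z"
proof -
  have n1: "0 \<le> pdist p x y" "0 \<le> pdist p y z" using pdist_nonneg[OF assms(1)] by auto
  show ?thesis
  proof (cases "pdist p x y = 0 \<and> pdist p y z = 0")
    case True
    then have "x = y" "y = z" using pdist_zero_iff[OF assms(1)] assms by auto
    then show ?thesis using pdist_nonneg[OF assms(1), of x z] True by simp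
  next
    case False
    have "\<exists>n. max (pdist p x y) (pdist p y z) = real p powi n"
    proof (cases "pdist p x y \<le> pdist p y z")
      case True
      then have "pdist p y z \<noteq> 0" using False n1 by auto
      then show ?thesis using True pdist_cases[of p y z] by (auto simp: max_def)
    next
      case F: False
      then have "pdist p x y \<noteq> 0" using n1 by auto
      then show ?thesis using F pdist_cases[of p x y] by (auto simp: max_def)
    qed
    then obtain n where n: "max (pdist p x y) (pdist p y z) = real p powi n" by blast
    then have "pdist p x y \<le> real p powi n" "pdist p y z \<le> real p powi n" by linarith+
    then have "x (- n) = z (- n)" using pdist_le_iff[OF assms(1,2,3)] pdist_le_iff[OF assms(1,3,4)] by simp
    then have "pdist p x z \<le> real p powi n" using pdist_le_iff[OF assms(1,2,4)] by simp
    also have "\<dots> \<le> pdist p x y + pdist p y z" using n n1 by linarith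
    finally show ?thesis .
  qed
qed

lemma Metric_Qp: assumes "p \<ge> 2" shows "Metric_space (Qp p) (pdist p)"
proof
  show "\<And>x y. 0 \<le> pdist p x y" using pdist_nonneg[OF assms] .
  show "\<And>x y. pdist p x y = pdist p y x" using pdist_sym_gen[OF assms] .
  show "\<And>x y. x \<in> Qp p \<Longrightarrow> y \<in> Qp p \<Longrightarrow> (pdist p x y = 0) = (x = y)" using pdist_zero_iff[OF assms] .
  show "\<And>x y z. x \<in> Qp p \<Longrightarrow> y \<in> Qp p \<Longrightarrow> z \<in> Qp p \<Longrightarrow> pdist p x z \<le> pdist p x y + pdist p y z"
    using pdist_triangle[OF assms] .
qed

definition cyl :: "nat \<Rightarrow> int \<Rightarrow> rat \<Rightarrow> (int \<Rightarrow> rat) set" where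
  "cyl p m s = {y \<in> Qp p. y m = s}"

definition isd :: "nat \<Rightarrow> rat \<Rightarrow> bool" where
  "isd p r \<longleftrightarrow> (\<exists>K. cng p K r 0)"

definition emb :: "nat \<Rightarrow> rat \<Rightarrow> (int \<Rightarrow> rat)" where
  "emb p r = (\<lambda>k. pmod p k r)"

lemma isd_Qp: assumes "p \<ge> 2" "y \<in> Qp p" shows "isd p (y k)"
proof -
  obtain K where K: "\<forall>k\<le>K. y k = 0" using QpD(4)[OF assms(2)] by blast
  show ?thesis
  proof (cases "k \<le> K")
    case True then show ?thesis using K unfolding isd_def by (intro exI[of _ K]) simp
  next
    case False
    then have "cng p K (y k) (y K)" using Qp_cng[OF assms, of K k] by simp
    then show ?thesis using K unfolding isd_def by (intro exI[of _ K]) simp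
  qed
qed

lemma isd_PP: "p \<ge> 2 \<Longrightarrow> isd p (PP p m)"
  unfolding isd_def cng_def by (intro exI[of _ m]) simp

lemma isd_add: assumes "p \<ge> 2" "isd p a" "isd p b" shows "isd p (a + b)"
proof -
  obtain K1 K2 where "cng p K1 a 0" "cng p K2 b 0" using assms unfolding isd_def by blast
  then have "cng p (min K1 K2) a 0" "cng p (min K1 K2) b 0" using cng_down[OF assms(1)] by (meson min.cobounded1 min.cobounded2)+
  then have "cng p (min K1 K2) (a + b) (0 + 0)" by (rule cng_add)
  then show ?thesis unfolding isd_def by auto
qed

lemma isd_mult: assumes "isd p a" shows "isd p (of_int j * a)"
proof -
  obtain K where "cng p K a 0" using assms unfolding isd_def by blast
  then have "a / PP p K \<in> \<int>" unfolding cng_def by simp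
  then have "of_int j * (a / PP p K) \<in> \<int>" by (intro Ints_mult) auto
  moreover have "(of_int j * a - 0) / PP p K = of_int j * (a / PP p K)" by simp
  ultimately have "(of_int j * a - 0) / PP p K \<in> \<int>" by metis
  then show ?thesis unfolding isd_def cng_def by blast
qed

lemma emb_Qp: assumes "p \<ge> 2" "isd p r" shows "emb p r \<in> Qp p"
proof (rule QpI)
  fix k
  show "0 \<le> emb p r k" "emb p r k < PP p k" unfolding emb_def using pmod_range[OF assms(1)] by auto
  have "cng p k (pmod p (k+1) r) r" using cng_down[OF assms(1) _ pmod_cng[OF assms(1)]] by simp
  then show "cng p k (emb p r (k + 1)) (emb p r k)" unfolding emb_def
    using pmod_cng[OF assms(1), of k r] by (meson cng_sym cng_trans)
next
  obtain K where K: "cng p K r 0" using assms(2) unfolding isd_def by blast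
  have "\<forall>k\<le>K. emb p r k = 0"
  proof (intro allI impI)
    fix k assume "k \<le> K"
    then have "cng p k r 0" using cng_down[OF assms(1) _ K] by simp
    then show "emb p r k = 0" unfolding emb_def using pmod_eq_cng[OF assms(1), of 0 k r] PP_pos[OF assms(1)] by simp
  qed
  then show "\<exists>K. \<forall>k\<le>K. emb p r k = 0" by blast
qed

lemma emb_at: "p \<ge> 2 \<Longrightarrow> 0 \<le> r \<Longrightarrow> r < PP p k \<Longrightarrow> emb p r k = r"
  unfolding emb_def by (rule pmod_id)

lemma PP_nat: "p \<ge> 2 \<Longrightarrow> m \<le> m' \<Longrightarrow> PP p (m' - m) = of_nat (p ^ nat (m' - m))"
  by (simp add: power_int_def)

lemma PP_split: "p \<ge> 2 \<Longrightarrow> m \<le> m' \<Longrightarrow> PP p m' = PP p m * of_nat (p ^ nat (m' - m))"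
  using PP_add[of p m "m' - m"] PP_nat[of p m m'] by simp

lemma res_cyl:
  assumes p: "p \<ge> 2" and x: "x \<in> Qp p" and mm: "m \<le> m'"
  shows "(\<lambda>y. y m') ` cyl p m (x m) = (\<lambda>j. x m + of_nat j * PP p m) ` {..< p ^ nat (m' - m)}"
proof
  have Pm: "PP p m > 0" using PP_pos[OF p] .
  have Pm': "PP p m' = PP p m * of_nat (p ^ nat (m' - m))" using PP_split[OF p mm] .
  show "(\<lambda>y. y m') ` cyl p m (x m) \<subseteq> (\<lambda>j. x m + of_nat j * PP p m) ` {..< p ^ nat (m' - m)}"
  proof
    fix r assume "r \<in> (\<lambda>y. y m') ` cyl p m (x m)"
    then obtain y where y: "y \<in> Qp p" "y m = x m" "r = y m'" unfolding cyl_def by auto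
    have "cng p m (y m') (x m)" using Qp_cng[OF p y(1) mm] y(2) by simp
    then obtain z where z: "(y m' - x m) / PP p m = of_int z" unfolding cng_def by (auto elim: Ints_cases)
    have rz: "y m' = x m + of_int z * PP p m" using z Pm p by (simp add: divide_eq_eq)
    have b1: "0 \<le> y m'" "y m' < PP p m'" using QpD[OF y(1)] by auto
    have b2: "0 \<le> x m" "x m < PP p m" using QpD[OF x] by auto
    have "(-1) * PP p m < of_int z * PP p m" using rz b1 b2 by simp
    then have "(-1::rat) < of_int z" using Pm mult_less_cancel_right_pos by blast
    then have z0: "0 \<le> z" by linarith
    have "of_int z * PP p m < PP p m * of_nat (p ^ nat (m' - m))" using rz b1 b2 Pm' by linarith
    then have "of_int z * PP p m < of_nat (p ^ nat (m' - m)) * PP p m" by (simp add: mult.commute)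
    then have "(of_int z :: rat) < of_nat (p ^ nat (m' - m))" using Pm mult_less_cancel_right_pos by blast
    then have "z < int (p ^ nat (m' - m))" by (metis of_int_less_iff of_int_of_nat_eq)
    then have "nat z < p ^ nat (m' - m)" using z0 by linarith
    moreover have "r = x m + of_nat (nat z) * PP p m" using rz y(3) z0 by simp
    ultimately show "r \<in> (\<lambda>j. x m + of_nat j * PP p m) ` {..< p ^ nat (m' - m)}" by auto
  qed
  show "(\<lambda>j. x m + of_nat j * PP p m) ` {..< p ^ nat (m' - m)} \<subseteq> (\<lambda>y. y m') ` cyl p m (x m)"
  proof
    fix r assume "r \<in> (\<lambda>j. x m + of_nat j * PP p m) ` {..< p ^ nat (m' - m)}"
    then obtain j where j: "j < p ^ nat (m' - m)" "r = x m + of_nat j * PP p m" by auto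
    have b2: "0 \<le> x m" "x m < PP p m" using QpD[OF x] by auto
    have isr: "isd p r" unfolding j(2)
      using isd_add[OF p isd_Qp[OF p x] isd_mult[OF isd_PP[OF p], of "int j"]] by simp
    have r0: "0 \<le> r" using j(2) b2 Pm by simp
    have "j + 1 \<le> p ^ nat (m' - m)" using j(1) by simp
    then have "(of_nat (j + 1) :: rat) \<le> of_nat (p ^ nat (m' - m))" by (rule of_nat_mono)
    then have "of_nat j \<le> (of_nat (p ^ nat (m' - m)) :: rat) - 1" by simp
    then have "of_nat j * PP p m \<le> (of_nat (p ^ nat (m' - m)) - 1) * PP p m" using Pm by (simp add: mult_right_mono)
    then have r1: "r < PP p m'" using j(2) b2 Pm' by (simp add: algebra_simps)
    define y where "y = emb p r"
    have yQ: "y \<in> Qp p" unfolding y_def using emb_Qp[OF p isr] .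
    have "y m' = r" unfolding y_def using emb_at[OF p r0 r1] .
    moreover have "y m = x m"
    proof -
      have "cng p m r (x m)" unfolding j(2) using cng_mult_PP[of p m "x m" "int j"] by simp
      then have "pmod p m r = x m" using pmod_eq_cng[OF p b2] by blast
      then show ?thesis unfolding y_def emb_def by simp
    qed
    ultimately show "r \<in> (\<lambda>y. y m') ` cyl p m (x m)" using yQ unfolding cyl_def by force
  qed
qed

lemma card_res_cyl:
  assumes p: "p \<ge> 2" and x: "x \<in> Qp p" and mm: "m \<le> m'"
  shows "card ((\<lambda>y. y m') ` cyl p m (x m)) = p ^ nat (m' - m)"
proof -
  have "inj_on (\<lambda>j. x m + of_nat j * PP p m) {..< p ^ nat (m' - m)}"
    using PP_pos[OF p, of m] p by (intro inj_onI) simp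
  then show ?thesis unfolding res_cyl[OF assms] by (simp add: card_image)
qed

lemma cyl_nonempty_iff: "y \<in> cyl p m s \<Longrightarrow> cyl p m s = cyl p m (y m)"
  by (auto simp: cyl_def)

lemma finite_res_cyl:
  assumes p: "p \<ge> 2"
  shows "finite ((\<lambda>y. y m') ` cyl p m s)"
proof (cases "cyl p m s = {}")
  case True then show ?thesis by simp
next
  case False
  then obtain x where x: "x \<in> cyl p m s" by blast
  then have xQ: "x \<in> Qp p" and e: "cyl p m s = cyl p m (x m)" by (auto simp: cyl_def)
  show ?thesis
  proof (cases "m \<le> m'")
    case True then show ?thesis unfolding e res_cyl[OF p xQ True] by simp
  next
    case False
    have "(\<lambda>y. y m') ` cyl p m (x m) \<subseteq> {x m'}"
      using agree_down[OF p _ xQ, of _ m' m] False unfolding cyl_def by auto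
    then show ?thesis unfolding e using finite_subset by blast
  qed
qed

lemma powi_less_iff: assumes "(a::real) > 1" shows "a powi k < a powi l \<longleftrightarrow> k < l"
proof
  assume "k < l" then show "a powi k < a powi l" using assms by (rule power_int_strict_increasing)
next
  assume h: "a powi k < a powi l"
  show "k < l"
  proof (rule ccontr)
    assume "\<not> k < l"
    then have "a powi l \<le> a powi k" using assms by (intro power_int_increasing) auto
    then show False using h by simp
  qed
qed

lemma powi_le_iff: assumes "(a::real) > 1" shows "a powi k \<le> a powi l \<longleftrightarrow> k \<le> l"
  using powi_less_iff[OF assms, of l k] by linarith

lemma pdist_less_iff:
  assumes "p \<ge> 2" "x \<in> Qp p" "y \<in> Qp p"
  shows "pdist p x y < real p powi (1 - m) \<longleftrightarrow> x m = y m"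
proof -
  have "pdist p x y < real p powi (1 - m) \<longleftrightarrow> pdist p x y \<le> real p powi (- m)"
  proof (cases "pdist p x y = 0")
    case True then show ?thesis using assms(1) by simp
  next
    case False
    then obtain k where k: "pdist p x y = real p powi k" using pdist_cases by blast
    have "real p > 1" using assms(1) by simp
    then show ?thesis unfolding k using powi_less_iff[of "real p" k "1-m"] powi_le_iff[of "real p" k "-m"] by linarith
  qed
  also have "\<dots> \<longleftrightarrow> x m = y m" using pdist_le_iff[OF assms, of "-m"] by simp
  finally show ?thesis .
qed

lemma cyl_mball:
  assumes "p \<ge> 2" "x \<in> Qp p"
  shows "cyl p m (x m) = Metric_space.mball (Qp p) (pdist p) x (real p powi (1 - m))"
  using pdist_less_iff[OF assms(1,2)] assms(2) Metric_space.in_mball[OF Metric_Qp[OF assms(1)]]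
  unfolding cyl_def by auto

lemma pball_cyl:
  assumes "p \<ge> 2" "x \<in> Qp p"
  shows "pball p x n = cyl p (- n) (x (- n))"
  using pdist_le_iff[OF assms(1,2)] unfolding pball_def cyl_def by auto

lemma cyl_mcball:
  assumes "p \<ge> 2" "x \<in> Qp p"
  shows "cyl p m (x m) = Metric_space.mcball (Qp p) (pdist p) x (real p powi (- m))"
  using pdist_le_iff[OF assms(1,2), of _ "-m"] assms(2) Metric_space.in_mcball[OF Metric_Qp[OF assms(1)]]
  unfolding cyl_def by auto

lemma openin_cyl:
  assumes "p \<ge> 2" shows "openin (ptop p) (cyl p m s)"
proof (cases "cyl p m s = {}")
  case True then show ?thesis by simp
next
  case False
  then obtain x where x: "x \<in> cyl p m s" by blast
  then have xQ: "x \<in> Qp p" and e: "cyl p m s = cyl p m (x m)" by (auto simp: cyl_def)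
  show ?thesis unfolding e cyl_mball[OF assms xQ] ptop_def
    using Metric_space.openin_mball[OF Metric_Qp[OF assms]] .
qed

lemma closedin_cyl:
  assumes "p \<ge> 2" shows "closedin (ptop p) (cyl p m s)"
proof (cases "cyl p m s = {}")
  case True then show ?thesis by simp
next
  case False
  then obtain x where x: "x \<in> cyl p m s" by blast
  then have xQ: "x \<in> Qp p" and e: "cyl p m s = cyl p m (x m)" by (auto simp: cyl_def)
  have c: "closedin (Metric_space.mtopology (Qp p) (pdist p)) (Metric_space.mcball (Qp p) (pdist p) x (real p powi (- m)))"
    by (rule Metric_space.closedin_mcball[OF Metric_Qp[OF assms]])
  have eq2: "cyl p m (x m) = Metric_space.mcball (Qp p) (pdist p) x (real p powi (- m))"
    by (rule cyl_mcball[OF assms xQ])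
  show ?thesis unfolding ptop_def e eq2 by (rule c)
qed

lemma small_powi: assumes p: "p \<ge> 2" and e: "(\<epsilon>::real) > 0" shows "\<exists>k. real p powi k < \<epsilon>"
proof -
  have "inverse (real p) < 1" using p by (simp add: inverse_eq_divide)
  then obtain n where n: "inverse (real p) ^ n < \<epsilon>" using real_arch_pow_inv[OF e] by blast
  have "real p powi (- int n) = inverse (real p) ^ n"
    by (simp add: power_int_minus power_inverse)
  then show ?thesis using n by metis
qed

lemma small_level: assumes p: "p \<ge> 2" and e: "(\<epsilon>::real) > 0" shows "\<exists>L\<ge>m. real p powi (1 - L) < \<epsilon>"
proof -
  obtain k where k: "real p powi k < \<epsilon>" using small_powi[OF p e] by blast
  define L where "L = max m (1 - k)"
  have "real p powi (1 - L) \<le> real p powi k" using p unfolding L_def by (intro power_int_increasing) auto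
  then show ?thesis using k unfolding L_def by (intro exI[of _ "max m (1 - k)"]) auto
qed

lemma mcomplete_Qp: assumes p: "p \<ge> 2" shows "Metric_space.mcomplete (Qp p) (pdist p)"
proof -
  interpret MQ: Metric_space "Qp p" "pdist p" by (rule Metric_Qp[OF p])
  show ?thesis unfolding MQ.mcomplete_def
  proof (intro allI impI)
    fix \<sigma> assume C: "MQ.MCauchy \<sigma>"
    then have rng: "\<And>n. \<sigma> n \<in> Qp p" unfolding MQ.MCauchy_def by auto
    have ag: "\<exists>N. \<forall>n\<ge>N. \<sigma> n k = \<sigma> N k" for k
    proof -
      have pos: "real p powi (1 - k) > 0" using p by simp
      have "\<exists>N. \<forall>n n'. N \<le> n \<longrightarrow> N \<le> n' \<longrightarrow> pdist p (\<sigma> n) (\<sigma> n') < real p powi (1 - k)"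
        using C pos unfolding MQ.MCauchy_def by blast
      then obtain N where N: "\<And>n n'. N \<le> n \<Longrightarrow> N \<le> n' \<Longrightarrow> pdist p (\<sigma> n) (\<sigma> n') < real p powi (1 - k)"
        by blast
      have "\<forall>n\<ge>N. \<sigma> n k = \<sigma> N k"
      proof (intro allI impI)
        fix n assume "N \<le> n"
        then have "pdist p (\<sigma> n) (\<sigma> N) < real p powi (1 - k)" using N by simp
        then show "\<sigma> n k = \<sigma> N k" using pdist_less_iff[OF p rng rng] by simp
      qed
      then show ?thesis by blast
    qed
    define N where "N k = (SOME N. \<forall>n\<ge>N. \<sigma> n k = \<sigma> N k)" for k
    define y where "y k = \<sigma> (N k) k" for k
    have Nk: "\<And>n k. N k \<le> n \<Longrightarrow> \<sigma> n k = y k"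
      unfolding y_def N_def using someI_ex[OF ag] by blast
    have yQ: "y \<in> Qp p"
    proof (rule QpI)
      fix k
      show "0 \<le> y k" "y k < PP p k" unfolding y_def using QpD[OF rng] by auto
      define n where "n = max (N k) (N (k+1))"
      have e: "\<sigma> n k = y k" "\<sigma> n (k+1) = y (k+1)" using Nk unfolding n_def by auto
      have "cng p k (\<sigma> n (k+1)) (\<sigma> n k)" by (rule QpD(3)[OF rng])
      then show "cng p k (y (k + 1)) (y k)" unfolding e .
    next
      obtain K0 where K0: "cng p K0 (y 0) 0" using isd_Qp[OF p rng, of "N 0" 0] unfolding isd_def y_def by blast
      have "\<forall>k\<le>min K0 0. y k = 0"
      proof (intro allI impI)
        fix k assume k: "k \<le> min K0 0"
        define n where "n = max (N k) (N 0)"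
        have e1: "\<sigma> n k = y k" "\<sigma> n 0 = y 0" using Nk unfolding n_def by auto
        have "y k = pmod p k (y 0)" using Qp_res[OF p rng[of n], of k 0] k e1 by simp
        moreover have "cng p k (y 0) 0" using cng_down[OF p _ K0, of k] k by simp
        ultimately show "y k = 0" using pmod_eq_cng[OF p, of 0 k "y 0"] PP_pos[OF p] by simp
      qed
      then show "\<exists>K. \<forall>k\<le>K. y k = 0" by blast
    qed
    have "limitin MQ.mtopology \<sigma> y sequentially"
      unfolding MQ.limit_metric_sequentially
    proof (intro conjI yQ allI impI)
      fix \<epsilon> :: real assume "\<epsilon> > 0"
      then obtain k where k: "real p powi (1 - k) < \<epsilon>" using small_level[OF p, of \<epsilon> 0] by blast
      have "\<forall>n\<ge>N k. \<sigma> n \<in> Qp p \<and> pdist p (\<sigma> n) y < \<epsilon>"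
      proof (intro allI impI conjI)
        fix n assume "N k \<le> n"
        then have "\<sigma> n k = y k" by (rule Nk)
        then have "pdist p (\<sigma> n) y < real p powi (1 - k)" using pdist_less_iff[OF p rng yQ] by simp
        then show "pdist p (\<sigma> n) y < \<epsilon>" using k by simp
        show "\<sigma> n \<in> Qp p" by (rule rng)
      qed
      then show "\<exists>Na. \<forall>n\<ge>Na. \<sigma> n \<in> Qp p \<and> pdist p (\<sigma> n) y < \<epsilon>" by blast
    qed
    then show "\<exists>x. limitin MQ.mtopology \<sigma> x sequentially" by blast
  qed
qed

lemma totally_bounded_cyl: assumes p: "p \<ge> 2" shows "Metric_space.mtotally_bounded (Qp p) (pdist p) (cyl p m s)"
proof -
  interpret MQ: Metric_space "Qp p" "pdist p" by (rule Metric_Qp[OF p])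
  show ?thesis unfolding MQ.mtotally_bounded_def
  proof (intro allI impI)
    fix \<epsilon> :: real assume "\<epsilon> > 0"
    then obtain L where L: "real p powi (1 - L) < \<epsilon>" using small_level[OF p, of \<epsilon> 0] by blast
    define S where "S = cyl p m s"
    define R where "R = (\<lambda>y. y L) ` S"
    define rep where "rep r = (SOME y. y \<in> S \<and> y L = r)" for r
    have finR: "finite R" unfolding R_def S_def using finite_res_cyl[OF p] .
    have rep: "rep r \<in> S \<and> rep r L = r" if "r \<in> R" for r
    proof -
      have "\<exists>y. y \<in> S \<and> y L = r" using that unfolding R_def by auto
      then show ?thesis unfolding rep_def by (rule someI_ex)
    qed
    have SQ: "S \<subseteq> Qp p" unfolding S_def cyl_def by auto
    have "S \<subseteq> (\<Union>x\<in>rep ` R. MQ.mball x \<epsilon>)"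
    proof
      fix z assume z: "z \<in> S"
      then have zR: "z L \<in> R" unfolding R_def by auto
      have w: "rep (z L) \<in> S" "rep (z L) L = z L" using rep[OF zR] by auto
      then have "pdist p (rep (z L)) z < real p powi (1 - L)" using pdist_less_iff[OF p, of "rep (z L)" z L] SQ z by auto
      then have "z \<in> MQ.mball (rep (z L)) \<epsilon>" using L w SQ z by auto
      then show "z \<in> (\<Union>x\<in>rep ` R. MQ.mball x \<epsilon>)" using zR by blast
    qed
    moreover have "rep ` R \<subseteq> S" using rep by auto
    ultimately show "\<exists>K. finite K \<and> K \<subseteq> cyl p m s \<and> cyl p m s \<subseteq> (\<Union>x\<in>K. MQ.mball x \<epsilon>)"
      using finR unfolding S_def by (intro exI[of _ "rep ` R"]) auto
  qed
qed

lemma compact_cyl: assumes p: "p \<ge> 2" shows "compactin (ptop p) (cyl p m s)"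
proof -
  interpret MQ: Metric_space "Qp p" "pdist p" by (rule Metric_Qp[OF p])
  have "compactin MQ.mtopology (MQ.mtopology closure_of (cyl p m s))"
    using MQ.mtotally_bounded_eq_compact_closure_of[OF mcomplete_Qp[OF p]] totally_bounded_cyl[OF p] by blast
  moreover have "MQ.mtopology closure_of (cyl p m s) = cyl p m s"
    using closure_of_closedin closedin_cyl[OF p] unfolding ptop_def by blast
  ultimately show ?thesis unfolding ptop_def by simp
qed

lemma compact_pball: assumes p: "p \<ge> 2" and x: "x \<in> Qp p" shows "compactin (ptop p) (pball p x n)"
  unfolding pball_cyl[OF p x] by (rule compact_cyl[OF p])

lemma finite_pball_T: assumes p: "p \<ge> 2" "x \<in> Qp p" "locally_finite p T"
  shows "finite (pball p x n \<inter> T)"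
  using assms compact_pball unfolding locally_finite_def by blast

definition Cyls :: "nat \<Rightarrow> (int \<Rightarrow> rat) set set" where
  "Cyls p = (\<lambda>(m, s). cyl p m s) ` UNIV"

lemma countable_Cyls: "countable (Cyls p)"
  unfolding Cyls_def by simp

lemma cyl_in_Cyls[simp]: "cyl p m s \<in> Cyls p"
  unfolding Cyls_def by auto

lemma topspace_ptop: "p \<ge> 2 \<Longrightarrow> topspace (ptop p) = Qp p"
  unfolding ptop_def using Metric_space.topspace_mtopology[OF Metric_Qp] by blast

lemma open_Union_Cyls:
  assumes p: "p \<ge> 2" and U: "openin (ptop p) U"
  shows "U = \<Union>{C \<in> Cyls p. C \<subseteq> U}"
proof -
  interpret MQ: Metric_space "Qp p" "pdist p" by (rule Metric_Qp[OF p])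
  have "x \<in> \<Union>{C \<in> Cyls p. C \<subseteq> U}" if x: "x \<in> U" for x
  proof -
    have xQ: "x \<in> Qp p" using U x MQ.openin_mtopology unfolding ptop_def by blast
    obtain r where r: "r > 0" "MQ.mball x r \<subseteq> U" using U x MQ.openin_mtopology unfolding ptop_def by blast
    obtain m where m: "real p powi (1 - m) < r" using small_level[OF p r(1), of 0] by blast
    have "cyl p m (x m) \<subseteq> U" unfolding cyl_mball[OF p xQ] using r(2) m MQ.mball_subset_concentric[of "real p powi (1 - m)" r x] by auto
    moreover have "x \<in> cyl p m (x m)" using xQ by (simp add: cyl_def)
    ultimately show ?thesis using cyl_in_Cyls[of p m "x m"] by blast
  qed
  then show ?thesis by blast
qed

lemma cyl_sub: "cyl p m s \<subseteq> Qp p" by (auto simp: cyl_def)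

lemma cyl_empty: "p \<ge> 2 \<Longrightarrow> cyl p m (-1) = {}"
proof -
  { fix y assume "y \<in> Qp p" "y m = -1" then have False using QpD(1)[of y p m] by simp }
  then show ?thesis unfolding cyl_def by auto
qed

lemma cyl_nested:
  assumes p: "p \<ge> 2" and mm: "m \<le> m'" and y: "y \<in> cyl p m' s'"
  shows "cyl p m' s' \<subseteq> cyl p m (y m)"
proof
  fix z assume z: "z \<in> cyl p m' s'"
  then have "z m = y m" using agree_down[OF p, of z y m m'] y mm by (auto simp: cyl_def)
  then show "z \<in> cyl p m (y m)" using z by (auto simp: cyl_def)
qed

lemma cyl_dichot:
  assumes p: "p \<ge> 2" and mm: "m \<le> m'"
  shows "cyl p m' s' \<subseteq> cyl p m s \<or> cyl p m s \<inter> cyl p m' s' = {}"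
proof (cases "cyl p m' s' = {}")
  case True then show ?thesis by simp
next
  case False
  then obtain y where y: "y \<in> cyl p m' s'" by blast
  show ?thesis
  proof (cases "y m = s")
    case True then show ?thesis using cyl_nested[OF p mm y] by simp
  next
    case False
    then have "cyl p m s \<inter> cyl p m (y m) = {}" by (auto simp: cyl_def)
    then show ?thesis using cyl_nested[OF p mm y] by blast
  qed
qed

lemma Cyls_E: "C \<in> Cyls p \<Longrightarrow> \<exists>m s. C = cyl p m s"
  unfolding Cyls_def by auto

lemma res_single: "(\<lambda>y. y m) ` cyl p m s \<subseteq> {s}" by (auto simp: cyl_def)

lemma level_unique:
  assumes p: "p \<ge> 2" and ne: "cyl p m s \<noteq> {}" and eq: "cyl p m s = cyl p m' s'" and mm: "m \<le> m'"
  shows "m = m'"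
proof -
  obtain y where y: "y \<in> cyl p m s" using ne by blast
  then have yQ: "y \<in> Qp p" and e: "cyl p m s = cyl p m (y m)" by (auto simp: cyl_def)
  have "card ((\<lambda>z. z m') ` cyl p m (y m)) = p ^ nat (m' - m)" by (rule card_res_cyl[OF p yQ mm])
  moreover have "card ((\<lambda>z. z m') ` cyl p m (y m)) \<le> 1"
  proof -
    have "(\<lambda>z. z m') ` cyl p m (y m) \<subseteq> {s'}" using res_single[of m' p s'] e eq by simp
    then have "card ((\<lambda>z. z m') ` cyl p m (y m)) \<le> card {s'}" by (rule card_mono[rotated]) simp
    then show ?thesis by simp
  qed
  ultimately have le1: "p ^ nat (m' - m) \<le> 1" by simp
  have "nat (m' - m) = 0"
  proof (rule ccontr)
    assume "nat (m' - m) \<noteq> 0"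
    then have "p ^ 1 \<le> p ^ nat (m' - m)" using p by (intro power_increasing) auto
    then show False using le1 p by simp
  qed
  then show ?thesis using mm by simp
qed

definition lev :: "nat \<Rightarrow> (int \<Rightarrow> rat) set \<Rightarrow> int" where
  "lev p C = (THE m. \<exists>s. C = cyl p m s)"

lemma lev_cyl:
  assumes p: "p \<ge> 2" and ne: "cyl p m s \<noteq> {}"
  shows "lev p (cyl p m s) = m"
  unfolding lev_def
proof (rule the_equality)
  show "\<exists>s'. cyl p m s = cyl p m s'" by blast
  fix m' assume "\<exists>s'. cyl p m s = cyl p m' s'"
  then obtain s' where e: "cyl p m s = cyl p m' s'" by blast
  show "m' = m"
  proof (cases "m \<le> m'")
    case True then show ?thesis using level_unique[OF p ne e] by simp
  next
    case False
    have "cyl p m' s' \<noteq> {}" using ne e by simp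
    then show ?thesis using level_unique[OF p _ e[symmetric]] False by simp
  qed
qed

definition mu0 :: "nat \<Rightarrow> (int \<Rightarrow> rat) set \<Rightarrow> ennreal" where
  "mu0 p C = (if C = {} then 0 else ennreal (real p powi (- lev p C)))"

lemma mu0_count:
  assumes p: "p \<ge> 2" and mL: "m \<le> L"
  shows "mu0 p (cyl p m s) = ennreal (real (card ((\<lambda>y. y L) ` cyl p m s)) * real p powi (- L))"
proof (cases "cyl p m s = {}")
  case True then show ?thesis by (simp add: mu0_def)
next
  case False
  then obtain y where y: "y \<in> cyl p m s" by blast
  then have yQ: "y \<in> Qp p" and e: "cyl p m s = cyl p m (y m)" by (auto simp: cyl_def)
  have c: "card ((\<lambda>y. y L) ` cyl p m s) = p ^ nat (L - m)" unfolding e by (rule card_res_cyl[OF p yQ mL])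
  have "real (p ^ nat (L - m)) * real p powi (- L) = real p powi (L - m) * real p powi (- L)"
    using mL by (simp add: power_int_def)
  also have "\<dots> = real p powi (- m)" using p by (simp flip: power_int_add)
  finally show ?thesis unfolding c mu0_def using lev_cyl[OF p False] False by simp
qed

lemma semiring_Cyls: assumes p: "p \<ge> 2" shows "semiring_of_sets (Qp p) (Cyls p)"
proof
  show "Cyls p \<subseteq> Pow (Qp p)" using cyl_sub unfolding Cyls_def by auto
  show "{} \<in> Cyls p" using cyl_empty[OF p] cyl_in_Cyls by metis
  fix a b assume a: "a \<in> Cyls p" and b: "b \<in> Cyls p"
  obtain m s where ea: "a = cyl p m s" using Cyls_E[OF a] by blast
  obtain m' s' where eb: "b = cyl p m' s'" using Cyls_E[OF b] by blast
  have E: "{} \<in> Cyls p" using cyl_empty[OF p] cyl_in_Cyls by metis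
  show "a \<inter> b \<in> Cyls p"
  proof (cases "m \<le> m'")
    case True
    have "b \<subseteq> a \<or> a \<inter> b = {}" using cyl_dichot[OF p True, of s' s] ea eb by simp
    moreover have "b \<subseteq> a \<Longrightarrow> a \<inter> b = b" by blast
    ultimately show ?thesis using b E by auto
  next
    case False
    then have mm: "m' \<le> m" by simp
    have "a \<subseteq> b \<or> b \<inter> a = {}" using cyl_dichot[OF p mm, of s s'] ea eb by simp
    moreover have "a \<subseteq> b \<Longrightarrow> a \<inter> b = a" by blast
    moreover have "b \<inter> a = {} \<Longrightarrow> a \<inter> b = {}" by blast
    ultimately show ?thesis using a E by auto
  qed
  show "\<exists>C\<subseteq>Cyls p. finite C \<and> disjoint C \<and> a - b = \<Union>C"
  proof (cases "a \<inter> b = {}")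
    case True then show ?thesis using a by (intro exI[of _ "{a}"]) auto
  next
    case False
    show ?thesis
    proof (cases "m' \<le> m")
      case True
      then have "a \<subseteq> b" using cyl_dichot[OF p True, of s s'] False ea eb by auto
      then show ?thesis by (intro exI[of _ "{}"]) auto
    next
      case mm0: False
      from mm0 have mm: "m \<le> m'" by simp
      have ba: "b \<subseteq> a" using cyl_dichot[OF p mm, of s' s] False ea eb by auto
      define C where "C = (\<lambda>r. cyl p m' r) ` ((\<lambda>y. y m') ` a - {s'})"
      have "finite C" unfolding C_def ea using finite_res_cyl[OF p] by simp
      moreover have "C \<subseteq> Cyls p" unfolding C_def by auto
      moreover have "disjoint C" unfolding C_def disjoint_def by (auto simp: cyl_def)
      moreover have "a - b = \<Union>C"
      proof
        show "a - b \<subseteq> \<Union>C"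
        proof
          fix z assume z: "z \<in> a - b"
          then have "z m' \<noteq> s'" "z \<in> Qp p" using ea eb by (auto simp: cyl_def)
          then show "z \<in> \<Union>C" unfolding C_def using z by (auto simp: cyl_def)
        qed
        show "\<Union>C \<subseteq> a - b"
        proof
          fix z assume "z \<in> \<Union>C"
          then obtain y where y: "y \<in> a" "y m' \<noteq> s'" "z \<in> cyl p m' (y m')" unfolding C_def by auto
          have "y \<in> cyl p m' (y m')" using y(1) ea by (simp add: cyl_def)
          then have "z \<in> cyl p m (y m)" using cyl_nested[OF p mm] y(3) by blast
          moreover have "y m = s" using y(1) ea by (simp add: cyl_def)
          ultimately show "z \<in> a - b" using y ea eb by (auto simp: cyl_def)
        qed
      qed
      ultimately show ?thesis by blast
    qed
  qed
qed

lemma mu0_fin_add: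
  assumes p: "p \<ge> 2" and F: "finite F" and AC: "\<And>i. i \<in> F \<Longrightarrow> A i \<in> Cyls p"
    and dj: "disjoint_family_on A F" and UC: "(\<Union>i\<in>F. A i) \<in> Cyls p"
  shows "mu0 p (\<Union>i\<in>F. A i) = (\<Sum>i\<in>F. mu0 p (A i))"
proof -
  obtain mU sU where eU: "(\<Union>i\<in>F. A i) = cyl p mU sU" using Cyls_E[OF UC] by blast
  have "\<forall>i\<in>F. \<exists>ms. A i = cyl p (fst ms) (snd ms)" using AC Cyls_E by fastforce
  then obtain ms where ms: "\<And>i. i \<in> F \<Longrightarrow> A i = cyl p (fst (ms i)) (snd (ms i))" by metis
  define m where "m i = fst (ms i)" for i
  define s where "s i = snd (ms i)" for i
  have eA: "\<And>i. i \<in> F \<Longrightarrow> A i = cyl p (m i) (s i)" using ms unfolding m_def s_def by blast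
  define L where "L = Max (insert mU (m ` F))"
  have LU: "mU \<le> L" unfolding L_def using F by simp
  have Li: "\<And>i. i \<in> F \<Longrightarrow> m i \<le> L" unfolding L_def using F by simp
  define R where "R (C :: (int \<Rightarrow> rat) set) = (\<lambda>y. y L) ` C" for C
  have RU: "R (\<Union>i\<in>F. A i) = (\<Union>i\<in>F. R (A i))" unfolding R_def by blast
  have finR: "\<forall>i\<in>F. finite (R (A i))"
  proof
    fix i assume i: "i \<in> F"
    show "finite (R (A i))" unfolding R_def eA[OF i] by (rule finite_res_cyl[OF p])
  qed
  have djR: "\<forall>i\<in>F. \<forall>j\<in>F. i \<noteq> j \<longrightarrow> R (A i) \<inter> R (A j) = {}"
  proof (intro ballI impI)
    fix i j assume ij: "i \<in> F" "j \<in> F" "i \<noteq> j"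
    show "R (A i) \<inter> R (A j) = {}"
    proof (rule ccontr)
      assume "R (A i) \<inter> R (A j) \<noteq> {}"
      then obtain z w where zw: "z \<in> A i" "w \<in> A j" "z L = w L" unfolding R_def by auto
      have zc: "z \<in> cyl p L (z L)" and wc: "w \<in> cyl p L (z L)" using zw eA ij by (auto simp: cyl_def)
      have "cyl p L (z L) \<subseteq> cyl p (m i) (z (m i))" using cyl_nested[OF p Li[OF ij(1)] zc] .
      moreover have "z (m i) = s i" using zw(1) eA[OF ij(1)] by (simp add: cyl_def)
      ultimately have "w \<in> A i" using wc eA[OF ij(1)] by auto
      then show False using zw(2) dj ij unfolding disjoint_family_on_def by blast
    qed
  qed
  have card: "card (R (\<Union>i\<in>F. A i)) = (\<Sum>i\<in>F. card (R (A i)))"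
    unfolding RU by (rule card_UN_disjoint[OF F finR djR])
  have "mu0 p (\<Union>i\<in>F. A i) = ennreal (real (card (R (\<Union>i\<in>F. A i))) * real p powi (- L))"
    unfolding eU R_def by (rule mu0_count[OF p LU])
  also have "\<dots> = ennreal (\<Sum>i\<in>F. real (card (R (A i))) * real p powi (- L))"
    unfolding card by (simp add: sum_distrib_right)
  also have "\<dots> = (\<Sum>i\<in>F. ennreal (real (card (R (A i))) * real p powi (- L)))"
    by (rule sum_ennreal[symmetric]) simp
  also have "\<dots> = (\<Sum>i\<in>F. mu0 p (A i))"
  proof (rule sum.cong[OF refl])
    fix i assume i: "i \<in> F"
    show "ennreal (real (card (R (A i))) * real p powi (- L)) = mu0 p (A i)"
      unfolding eA[OF i] R_def by (rule mu0_count[OF p Li[OF i], symmetric])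
  qed
  finally show ?thesis .
qed

lemma mu0_ca: assumes p: "p \<ge> 2" shows "countably_additive (Cyls p) (mu0 p)"
  unfolding countably_additive_def
proof (intro allI impI)
  fix A :: "nat \<Rightarrow> (int \<Rightarrow> rat) set"
  assume AC: "range A \<subseteq> Cyls p" and dj: "disjoint_family A" and UC: "(\<Union>i. A i) \<in> Cyls p"
  obtain mU sU where eU: "(\<Union>i. A i) = cyl p mU sU" using Cyls_E[OF UC] by blast
  have cpt: "compactin (ptop p) (\<Union>i. A i)" unfolding eU by (rule compact_cyl[OF p])
  have opn: "\<forall>B\<in>range A. openin (ptop p) B"
  proof
    fix B assume "B \<in> range A"
    then have "B \<in> Cyls p" using AC by blast
    then obtain m s where "B = cyl p m s" using Cyls_E by blast
    then show "openin (ptop p) B" using openin_cyl[OF p] by simp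
  qed
  have H: "\<forall>U. (\<forall>B\<in>U. openin (ptop p) B) \<and> (\<Union>i. A i) \<subseteq> \<Union>U \<longrightarrow> (\<exists>F. finite F \<and> F \<subseteq> U \<and> (\<Union>i. A i) \<subseteq> \<Union>F)"
    using cpt unfolding compactin_def by blast
  have "\<exists>F'. finite F' \<and> F' \<subseteq> range A \<and> (\<Union>i. A i) \<subseteq> \<Union>F'"
    using spec[OF H, of "range A"] opn by blast
  then obtain F' where F': "finite F'" "F' \<subseteq> range A" "(\<Union>i. A i) \<subseteq> \<Union>F'" by blast
  obtain F where F: "F \<subseteq> UNIV" "finite F" "F' = A ` F" using finite_subset_image[OF F'(1,2)] by blast
  have cov: "(\<Union>i. A i) = (\<Union>i\<in>F. A i)" using F'(3) F(3) by blast
  have zero: "A i = {}" if "i \<notin> F" for i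
  proof -
    have "A i \<subseteq> (\<Union>j\<in>F. A j)" using cov by blast
    moreover have "A i \<inter> A j = {}" if "j \<in> F" for j
    proof -
      have "i \<noteq> j" using \<open>i \<notin> F\<close> that by blast
      then show ?thesis using dj unfolding disjoint_family_on_def by blast
    qed
    ultimately show ?thesis by blast
  qed
  have "(\<Sum>i. mu0 p (A i)) = (\<Sum>i\<in>F. mu0 p (A i))"
    by (rule suminf_finite[OF F(2)]) (simp add: zero mu0_def)
  also have "\<dots> = mu0 p (\<Union>i\<in>F. A i)"
    using AC dj UC cov by (intro mu0_fin_add[OF p F(2), symmetric]) (auto simp: disjoint_family_on_def)
  also have "\<dots> = mu0 p (\<Union>i. A i)" using cov by simp
  finally show "(\<Sum>i. mu0 p (A i)) = mu0 p (\<Union>i. A i)" .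
qed

lemma mu0_pos: "positive (Cyls p) (mu0 p)"
  unfolding positive_def mu0_def by simp

lemma measure_exists:
  assumes p: "p \<ge> 2"
  shows "\<exists>M. space M = Qp p \<and> sets M = sigma_sets (Qp p) (Cyls p) \<and> (\<forall>C\<in>Cyls p. emeasure M C = mu0 p C)"
proof -
  interpret S: semiring_of_sets "Qp p" "Cyls p" by (rule semiring_Cyls[OF p])
  obtain \<mu> where mu: "\<forall>C\<in>Cyls p. \<mu> C = mu0 p C" and ms: "measure_space (Qp p) (sigma_sets (Qp p) (Cyls p)) \<mu>"
    using S.caratheodory[OF mu0_pos mu0_ca[OF p]] by blast
  define M where "M = measure_of (Qp p) (sigma_sets (Qp p) (Cyls p)) \<mu>"
  have sub: "Cyls p \<subseteq> Pow (Qp p)" using cyl_sub unfolding Cyls_def by auto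
  have sa: "sigma_algebra (Qp p) (sigma_sets (Qp p) (Cyls p))" by (rule sigma_algebra_sigma_sets[OF sub])
  have "space M = Qp p" unfolding M_def by (rule sigma_algebra.space_measure_of_eq[OF sa])
  moreover have "sets M = sigma_sets (Qp p) (Cyls p)" unfolding M_def by (rule sigma_algebra.sets_measure_of_eq[OF sa])
  moreover have "\<forall>C\<in>Cyls p. emeasure M C = mu0 p C"
  proof
    fix C assume C: "C \<in> Cyls p"
    have "emeasure M C = \<mu> C" unfolding M_def
      using ms C unfolding measure_space_def by (intro emeasure_measure_of_sigma) auto
    then show "emeasure M C = mu0 p C" using mu C by simp
  qed
  ultimately show ?thesis by blast
qed

lemma cng_shift: "cng p k (a + b) c \<longleftrightarrow> cng p k b (c - a)"
  unfolding cng_def by (simp add: algebra_simps)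

lemma padd_cancel:
  assumes p: "p \<ge> 2" and x: "x \<in> Qp p" and y: "y \<in> Qp p"
  shows "padd p x (padd p (pneg p x) y) = y" "padd p (pneg p x) (padd p x y) = y"
proof -
  have Q1: "padd p x (padd p (pneg p x) y) \<in> Qp p" using padd_Qp[OF p x padd_Qp[OF p pneg_Qp[OF p x] y]] .
  have Q2: "padd p (pneg p x) (padd p x y) \<in> Qp p" using padd_Qp[OF p pneg_Qp[OF p x] padd_Qp[OF p x y]] .
  show "padd p x (padd p (pneg p x) y) = y"
  proof (rule Qp_eqI[OF p Q1 y])
    fix k
    have "cng p k (padd p x (padd p (pneg p x) y) k) (x k + padd p (pneg p x) y k)" by (rule padd_cng[OF p])
    moreover have "cng p k (x k + padd p (pneg p x) y k) (x k + (pneg p x k + y k))"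
      by (rule cng_add[OF cng_refl padd_cng[OF p]])
    moreover have "cng p k (x k + (pneg p x k + y k)) (x k + (- x k + y k))"
      by (rule cng_add[OF cng_refl cng_add[OF pneg_cng[OF p] cng_refl]])
    ultimately show "cng p k (padd p x (padd p (pneg p x) y) k) (y k)" using cng_trans by fastforce
  qed
  show "padd p (pneg p x) (padd p x y) = y"
  proof (rule Qp_eqI[OF p Q2 y])
    fix k
    have "cng p k (padd p (pneg p x) (padd p x y) k) (pneg p x k + padd p x y k)" by (rule padd_cng[OF p])
    moreover have "cng p k (pneg p x k + padd p x y k) (- x k + (x k + y k))"
      by (rule cng_add[OF pneg_cng[OF p] padd_cng[OF p]])
    ultimately show "cng p k (padd p (pneg p x) (padd p x y) k) (y k)" using cng_trans by fastforce
  qed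
qed

lemma pre_cyl:
  assumes p: "p \<ge> 2" and t: "t \<in> Qp p" and w: "w \<in> Qp p"
  shows "{y \<in> Qp p. padd p t y \<in> cyl p m (w m)} = cyl p m (pmod p m (w m - t m))"
proof -
  have "padd p t y \<in> cyl p m (w m) \<longleftrightarrow> y m = pmod p m (w m - t m)" if y: "y \<in> Qp p" for y
  proof -
    have "padd p t y \<in> cyl p m (w m) \<longleftrightarrow> pmod p m (t m + y m) = w m"
      using padd_Qp[OF p t y] by (simp add: cyl_def padd_def)
    also have "\<dots> \<longleftrightarrow> cng p m (t m + y m) (w m)" using pmod_eq_cng[OF p QpD(1,2)[OF w]] .
    also have "\<dots> \<longleftrightarrow> cng p m (y m) (w m - t m)" by (rule cng_shift)
    also have "\<dots> \<longleftrightarrow> pmod p m (w m - t m) = y m"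
      using pmod_eq_cng[OF p QpD(1,2)[OF y], of m "w m - t m"] cng_sym by blast
    finally show ?thesis by auto
  qed
  then show ?thesis unfolding cyl_def by auto
qed

lemma pre_Cyls:
  assumes p: "p \<ge> 2" and t: "t \<in> Qp p" and C: "C \<in> Cyls p"
  shows "{y \<in> Qp p. padd p t y \<in> C} \<in> Cyls p \<and> mu0 p {y \<in> Qp p. padd p t y \<in> C} = mu0 p C"
proof -
  obtain m s where eC: "C = cyl p m s" using Cyls_E[OF C] by blast
  show ?thesis
  proof (cases "C = {}")
    case True
    then have "{y \<in> Qp p. padd p t y \<in> C} = {}" by simp
    then show ?thesis using True cyl_in_Cyls[of p m "-1"] cyl_empty[OF p, of m] by (simp add: mu0_def)
  next
    case False
    then obtain w where w: "w \<in> C" by blast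
    then have wQ: "w \<in> Qp p" and e: "C = cyl p m (w m)" using eC by (auto simp: cyl_def)
    have pre: "{y \<in> Qp p. padd p t y \<in> C} = cyl p m (pmod p m (w m - t m))" unfolding e by (rule pre_cyl[OF p t wQ])
    have y0: "padd p (pneg p t) w \<in> {y \<in> Qp p. padd p t y \<in> C}"
      using padd_cancel(1)[OF p t wQ] padd_Qp[OF p pneg_Qp[OF p t] wQ] w by simp
    then have ne: "cyl p m (pmod p m (w m - t m)) \<noteq> {}" using pre by auto
    have "mu0 p (cyl p m (pmod p m (w m - t m))) = mu0 p C"
      using lev_cyl[OF p ne] lev_cyl[OF p, of m "w m"] False e ne unfolding mu0_def by simp
    then show ?thesis using pre by simp
  qed
qed

lemma sigma_Cyls_eq:
  assumes p: "p \<ge> 2"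
  shows "sigma_sets (Qp p) (Cyls p) = sigma_sets (Qp p) {U. openin (ptop p) U}"
proof
  have sub: "Cyls p \<subseteq> Pow (Qp p)" using cyl_sub unfolding Cyls_def by auto
  show "sigma_sets (Qp p) (Cyls p) \<subseteq> sigma_sets (Qp p) {U. openin (ptop p) U}"
    by (rule sigma_sets_mono') (use openin_cyl[OF p] Cyls_E in fastforce)
  have sa: "sigma_algebra (Qp p) (sigma_sets (Qp p) (Cyls p))" by (rule sigma_algebra_sigma_sets[OF sub])
  show "sigma_sets (Qp p) {U. openin (ptop p) U} \<subseteq> sigma_sets (Qp p) (Cyls p)"
  proof (rule sigma_sets_mono, rule subsetI)
    fix U assume "U \<in> {U. openin (ptop p) U}"
    then have U: "openin (ptop p) U" by simp
    have "\<Union>{C \<in> Cyls p. C \<subseteq> U} \<in> sigma_sets (Qp p) (Cyls p)"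
      by (rule sigma_algebra.countable_Union[OF sa]) (auto intro: countable_subset[OF _ countable_Cyls])
    then show "U \<in> sigma_sets (Qp p) (Cyls p)" using open_Union_Cyls[OF p U] by simp
  qed
qed

lemma haar_exists:
  assumes p: "p \<ge> 2"
  shows "\<exists>M. is_haar p M"
proof -
  obtain M where sp: "space M = Qp p" and st: "sets M = sigma_sets (Qp p) (Cyls p)"
    and em: "\<And>C. C \<in> Cyls p \<Longrightarrow> emeasure M C = mu0 p C"
    using measure_exists[OF p] by blast
  have sub: "Cyls p \<subseteq> Pow (Qp p)" using cyl_sub unfolding Cyls_def by auto
  have CinM: "\<And>C. C \<in> Cyls p \<Longrightarrow> C \<in> sets M" unfolding st by auto
  have meas: "padd p t \<in> measurable M M" if t: "t \<in> Qp p" for t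
  proof (rule measurable_sigma_sets[OF st sub])
    show "padd p t \<in> space M \<rightarrow> Qp p" using padd_Qp[OF p t] sp by auto
    fix C assume "C \<in> Cyls p"
    then have "{y \<in> Qp p. padd p t y \<in> C} \<in> Cyls p" using pre_Cyls[OF p t] by blast
    moreover have "padd p t -` C \<inter> space M = {y \<in> Qp p. padd p t y \<in> C}" using sp by auto
    ultimately show "padd p t -` C \<inter> space M \<in> sets M" using CinM by simp
  qed
  have Ist: "Int_stable (Cyls p)" unfolding Int_stable_def using semiring_of_sets.Int[OF semiring_Cyls[OF p]] by blast
  define A where "A i = cyl p 0 (from_nat_into (UNIV :: rat set) i)" for i
  have Ar: "range A \<subseteq> Cyls p" unfolding A_def by auto
  have AU: "(\<Union>i. A i) = Qp p"
  proof
    show "(\<Union>i. A i) \<subseteq> Qp p" unfolding A_def cyl_def by auto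
    show "Qp p \<subseteq> (\<Union>i. A i)"
    proof
      fix y assume y: "y \<in> Qp p"
      obtain i where "from_nat_into (UNIV :: rat set) i = y 0" using from_nat_into_surj[of "UNIV :: rat set" "y 0"] by auto
      then have "y \<in> A i" using y unfolding A_def cyl_def by simp
      then show "y \<in> (\<Union>i. A i)" by blast
    qed
  qed
  have Afin: "emeasure M (A i) \<noteq> \<infinity>" for i using em[OF rangeI[of A i, THEN subsetD[OF Ar]]] by (simp add: mu0_def)
  have inv: "distr M M (padd p (pneg p x)) = M" if x: "x \<in> Qp p" for x
  proof -
    have nx: "pneg p x \<in> Qp p" by (rule pneg_Qp[OF p x])
    show ?thesis
    proof (rule measure_eqI_generator_eq[OF Ist sub _ _ _ Ar AU])
      fix C assume C: "C \<in> Cyls p"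
      have "emeasure (distr M M (padd p (pneg p x))) C = emeasure M (padd p (pneg p x) -` C \<inter> space M)"
        by (rule emeasure_distr[OF meas[OF nx] CinM[OF C]])
      also have "padd p (pneg p x) -` C \<inter> space M = {y \<in> Qp p. padd p (pneg p x) y \<in> C}" using sp by auto
      also have "emeasure M \<dots> = mu0 p C" using pre_Cyls[OF p nx C] em by simp
      finally show "emeasure (distr M M (padd p (pneg p x))) C = emeasure M C" using em[OF C] by simp
    next
      show "sets (distr M M (padd p (pneg p x))) = sigma_sets (Qp p) (Cyls p)" using st by simp
    next
      show "sets M = sigma_sets (Qp p) (Cyls p)" by (rule st)
    next
      fix i
      have Ai: "A i \<in> Cyls p" using Ar by blast
      have "emeasure (distr M M (padd p (pneg p x))) (A i) = emeasure M (padd p (pneg p x) -` (A i) \<inter> space M)"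
        by (rule emeasure_distr[OF meas[OF nx] CinM[OF Ai]])
      also have "padd p (pneg p x) -` (A i) \<inter> space M = {y \<in> Qp p. padd p (pneg p x) y \<in> A i}" using sp by auto
      also have "emeasure M \<dots> = mu0 p (A i)" using pre_Cyls[OF p nx Ai] em by simp
      finally show "emeasure (distr M M (padd p (pneg p x))) (A i) \<noteq> \<infinity>" by (simp add: mu0_def)
    qed
  qed
  have "is_haar p M"
    unfolding is_haar_def
  proof (intro conjI ballI allI impI)
    show "space M = Qp p" by (rule sp)
    show "sets M = sigma_sets (Qp p) {U. openin (ptop p) U}" using st sigma_Cyls_eq[OF p] by simp
  next
    fix x B assume x: "x \<in> Qp p" and B: "B \<in> sets M"
    have BQ: "B \<subseteq> Qp p" using sets.sets_into_space[OF B] sp by simp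
    have img: "padd p x ` B = padd p (pneg p x) -` B \<inter> space M"
    proof
      show "padd p x ` B \<subseteq> padd p (pneg p x) -` B \<inter> space M"
        using padd_cancel(2)[OF p x] padd_Qp[OF p x] BQ sp by auto
      show "padd p (pneg p x) -` B \<inter> space M \<subseteq> padd p x ` B"
      proof
        fix y assume y: "y \<in> padd p (pneg p x) -` B \<inter> space M"
        then have "y = padd p x (padd p (pneg p x) y)" using padd_cancel(1)[OF p x] sp by auto
        then show "y \<in> padd p x ` B" using y by blast
      qed
    qed
    show "padd p x ` B \<in> sets M" unfolding img using meas[OF pneg_Qp[OF p x]] B by (rule measurable_sets)
    have "emeasure (distr M M (padd p (pneg p x))) B = emeasure M (padd p (pneg p x) -` B \<inter> space M)"
      using emeasure_distr[OF meas[OF pneg_Qp[OF p x]]] B by blast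
    then show "emeasure M (padd p x ` B) = emeasure M B" unfolding img inv[OF x] by simp
  next
    fix K assume K: "compactin (ptop p) K"
    have KQ: "K \<subseteq> Qp p" using compactin_subset_topspace[OF K] topspace_ptop[OF p] by simp
    define U where "U = (\<lambda>y. cyl p 0 (y 0)) ` K"
    have H: "\<forall>U. (\<forall>B\<in>U. openin (ptop p) B) \<and> K \<subseteq> \<Union>U \<longrightarrow> (\<exists>F. finite F \<and> F \<subseteq> U \<and> K \<subseteq> \<Union>F)"
      using K unfolding compactin_def by blast
    have "\<forall>B\<in>U. openin (ptop p) B" unfolding U_def using openin_cyl[OF p] by blast
    moreover have "K \<subseteq> \<Union>U" unfolding U_def using KQ by (auto simp: cyl_def)
    ultimately obtain F where F: "finite F" "F \<subseteq> U" "K \<subseteq> \<Union>F" using spec[OF H, of U] by blast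
    have FC: "F \<subseteq> Cyls p" using F(2) unfolding U_def by auto
    have "emeasure M K \<le> emeasure M (\<Union>F)"
      by (rule emeasure_mono[OF F(3)]) (use FC CinM F(1) in \<open>auto intro: sets.finite_Union\<close>)
    also have "\<dots> \<le> (\<Sum>C\<in>F. emeasure M C)"
      using emeasure_subadditive_finite[OF F(1), of "\<lambda>C. C" M] FC CinM by auto
    also have "\<dots> < \<infinity>"
    proof -
      have "\<forall>C\<in>F. emeasure M C < \<infinity>" using FC em by (auto simp: mu0_def)
      then show ?thesis using F(1) by (simp add: sum_Pinfty less_top)
    qed
    finally show "emeasure M K < \<infinity>" .
  next
    have Z: "Zp p = cyl p 0 0"
      unfolding Zp_def cyl_def using pabs_le_iff[OF p, of _ 0] by auto
    have ne: "cyl p 0 0 \<noteq> {}" using pzero_Qp[OF p] by (auto simp: cyl_def pzero_def)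
    show "emeasure M (Zp p) = 1" unfolding Z using em[of "cyl p 0 0"] lev_cyl[OF p ne] ne by (simp add: mu0_def)
  qed
  then show ?thesis by blast
qed

lemma haar_is: "p \<ge> 2 \<Longrightarrow> is_haar p (haar p)"
  unfolding haar_def using haar_exists by (rule someI_ex)

lemma hs_nn:
  fixes h :: "'a \<Rightarrow> real"
  assumes cA: "countable A" and nn: "\<And>x. x \<in> A \<Longrightarrow> 0 \<le> h x" and hs: "(h has_sum s) A"
  shows "(\<integral>\<^sup>+x. ennreal (h x) \<partial>count_space A) = ennreal s"
proof (cases "finite A")
  case True
  have "s = (\<Sum>x\<in>A. h x)" using hs has_sum_finite_iff[OF True] by blast
  then show ?thesis using nn True by (simp add: nn_integral_count_space_finite)
next
  case False
  define e where "e = from_nat_into A"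
  have bij: "bij_betw e UNIV A" unfolding e_def by (rule bij_betw_from_nat_into[OF cA False])
  have "(\<integral>\<^sup>+x. ennreal (h x) \<partial>count_space A) = (\<integral>\<^sup>+n. ennreal (h (e n)) \<partial>count_space UNIV)"
    by (rule nn_integral_bij_count_space[OF bij, symmetric])
  also have "\<dots> = (\<Sum>n. ennreal (h (e n)))" by (rule nn_integral_count_space_nat)
  also have "((h \<circ> e) has_sum s) UNIV"
    using hs has_sum_reindex[of e UNIV h s] bij unfolding bij_betw_def by simp
  then have sm: "(h \<circ> e) sums s" by (rule has_sum_imp_sums)
  have "(\<Sum>n. ennreal (h (e n))) = ennreal (\<Sum>n. h (e n))"
    using sm nn bij unfolding bij_betw_def sums_iff by (intro suminf_ennreal2) (auto simp: comp_def)
  also have "(\<Sum>n. h (e n)) = s" using sm unfolding sums_iff comp_def by simp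
  finally show ?thesis .
qed

lemma padd_comm: "padd p x y = padd p y x"
  unfolding padd_def by (simp add: add.commute)

lemma psub_padd: assumes p: "p \<ge> 2" and z: "z \<in> Qp p" and t: "t \<in> Qp p"
  shows "psub p (padd p t z) t = z"
  unfolding psub_def using padd_comm[of p "padd p t z" "pneg p t"] padd_cancel(2)[OF p t z] by simp

lemma psub_eq_padd: "psub p y t = padd p (pneg p t) y"
  unfolding psub_def by (rule padd_comm)

lemma haar_facts:
  assumes H: "is_haar p M"
  shows "space M = Qp p" "sets M = sigma_sets (Qp p) {U. openin (ptop p) U}"
    "\<And>x A. x \<in> Qp p \<Longrightarrow> A \<in> sets M \<Longrightarrow> padd p x ` A \<in> sets M \<and> emeasure M (padd p x ` A) = emeasure M A"
    "\<And>K. compactin (ptop p) K \<Longrightarrow> emeasure M K < \<infinity>" "emeasure M (Zp p) = 1"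
  using H unfolding is_haar_def by auto

lemma haar_cyl: assumes p: "p \<ge> 2" and H: "is_haar p M" shows "cyl p m s \<in> sets M"
  unfolding haar_facts(2)[OF H] using openin_cyl[OF p] cyl_sub by (auto intro: sigma_sets.Basic)

lemma haar_trans:
  assumes p: "p \<ge> 2" and H: "is_haar p M" and t: "t \<in> Qp p"
  shows "padd p t \<in> measurable M M" "distr M M (padd p t) = M"
proof -
  note sp = haar_facts(1)[OF H]
  have nt: "pneg p t \<in> Qp p" by (rule pneg_Qp[OF p t])
  have pre: "padd p t -` A \<inter> space M = padd p (pneg p t) ` A" if A: "A \<in> sets M" for A
  proof
    have AQ: "A \<subseteq> Qp p" using sets.sets_into_space[OF A] sp by simp
    show "padd p t -` A \<inter> space M \<subseteq> padd p (pneg p t) ` A"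
    proof
      fix y assume y: "y \<in> padd p t -` A \<inter> space M"
      then have "y = padd p (pneg p t) (padd p t y)" using padd_cancel(2)[OF p t] sp by auto
      then show "y \<in> padd p (pneg p t) ` A" using y by blast
    qed
    show "padd p (pneg p t) ` A \<subseteq> padd p t -` A \<inter> space M"
      using padd_cancel(1)[OF p t] padd_Qp[OF p nt] AQ sp by auto
  qed
  show m: "padd p t \<in> measurable M M"
  proof (rule measurableI)
    show "\<And>x. x \<in> space M \<Longrightarrow> padd p t x \<in> space M" using padd_Qp[OF p t] sp by auto
    show "\<And>A. A \<in> sets M \<Longrightarrow> padd p t -` A \<inter> space M \<in> sets M"
      using pre haar_facts(3)[OF H nt] by simp
  qed
  show "distr M M (padd p t) = M"
  proof (rule measure_eqI)
    show "sets (distr M M (padd p t)) = sets M" by simp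
    fix A assume "A \<in> sets (distr M M (padd p t))"
    then have A: "A \<in> sets M" by simp
    show "emeasure (distr M M (padd p t)) A = emeasure M A"
      using emeasure_distr[OF m A] pre[OF A] haar_facts(3)[OF H nt A] by simp
  qed
qed

lemma cyl_trans: assumes p: "p \<ge> 2" and x: "x \<in> Qp p"
  shows "padd p x ` cyl p L 0 = cyl p L (x L)"
proof
  show "padd p x ` cyl p L 0 \<subseteq> cyl p L (x L)"
  proof
    fix z assume "z \<in> padd p x ` cyl p L 0"
    then obtain y where y: "y \<in> Qp p" "y L = 0" "z = padd p x y" by (auto simp: cyl_def)
    have "z L = pmod p L (x L)" using y unfolding padd_def by simp
    also have "\<dots> = x L" using pmod_id[OF p QpD(1,2)[OF x]] .
    finally show "z \<in> cyl p L (x L)" using padd_Qp[OF p x y(1)] y(3) by (simp add: cyl_def)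
  qed
  show "cyl p L (x L) \<subseteq> padd p x ` cyl p L 0"
  proof
    fix z assume z: "z \<in> cyl p L (x L)"
    then have zQ: "z \<in> Qp p" and zL: "z L = x L" by (auto simp: cyl_def)
    define y where "y = padd p (pneg p x) z"
    have yQ: "y \<in> Qp p" unfolding y_def by (rule padd_Qp[OF p pneg_Qp[OF p x] zQ])
    have "cng p L (y L) (pneg p x L + z L)" unfolding y_def by (rule padd_cng[OF p])
    moreover have "cng p L (pneg p x L + z L) (- x L + z L)" by (rule cng_add[OF pneg_cng[OF p] cng_refl])
    ultimately have "cng p L (y L) 0" using zL cng_trans by fastforce
    then have "y L = 0" using cng_range_eq[OF p _ QpD(1,2)[OF yQ, of L], of 0] PP_pos[OF p, of L] by simp
    moreover have "z = padd p x y" unfolding y_def using padd_cancel(1)[OF p x zQ] by simp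
    ultimately show "z \<in> padd p x ` cyl p L 0" using yQ by (auto simp: cyl_def)
  qed
qed

lemma countable_T: assumes p: "p \<ge> 2" and TQ: "T \<subseteq> Qp p" and lf: "locally_finite p T"
  shows "countable T"
proof -
  have "T = (\<Union>r. cyl p 0 r \<inter> T)" using TQ by (auto simp: cyl_def)
  moreover have "countable (\<Union>r. cyl p 0 r \<inter> T)"
    using lf compact_cyl[OF p] unfolding locally_finite_def by (intro countable_UN) (auto intro: countable_finite)
  ultimately show ?thesis by simp
qed

lemma key:
  assumes p: "p \<ge> 2" and H: "is_haar p M" and TQ: "T \<subseteq> Qp p" and lf: "locally_finite p T"
    and fm: "f \<in> borel_measurable M" and fnn: "\<And>x. x \<in> Qp p \<Longrightarrow> 0 \<le> f x"
    and AEs: "AE y in M. (\<integral>\<^sup>+ t. ennreal (f (psub p y t)) \<partial>count_space T) = 1"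
    and x: "x \<in> Qp p"
  shows "emeasure M (cyl p L (x L)) = (\<integral>\<^sup>+ z. ennreal (f z) * of_nat (card (cyl p L (psub p x z L) \<inter> T)) \<partial>M)"
proof -
  note sp = haar_facts(1)[OF H]
  have cT: "countable T" by (rule countable_T[OF p TQ lf])
  define B where "B = cyl p L (x L)"
  have Bm: "B \<in> sets M" unfolding B_def by (rule haar_cyl[OF p H])
  have gm: "(\<lambda>z. ennreal (f z)) \<in> borel_measurable M" using fm by measurable
  have gtm: "(\<lambda>y. ennreal (f (psub p y t))) \<in> borel_measurable M" if t: "t \<in> T" for t
  proof -
    have "pneg p t \<in> Qp p" using pneg_Qp[OF p] t TQ by auto
    then have "(\<lambda>y. ennreal (f (padd p (pneg p t) y))) \<in> borel_measurable M"
      using measurable_compose[OF haar_trans(1)[OF p H] gm] by blast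
    then show ?thesis unfolding psub_eq_padd .
  qed
  have m1: "(\<lambda>y. indicator B y * ennreal (f (psub p y t))) \<in> borel_measurable M" if t: "t \<in> T" for t
    using gtm[OF t] Bm by measurable
  have itm: "(\<lambda>z. indicator B (padd p t z) :: ennreal) \<in> borel_measurable M" if t: "t \<in> T" for t
    using measurable_compose[OF haar_trans(1)[OF p H] borel_measurable_indicator[OF Bm]] t TQ by blast
  have m2: "(\<lambda>z. indicator B (padd p t z) * ennreal (f z)) \<in> borel_measurable M" if t: "t \<in> T" for t
    using itm[OF t] gm by measurable
  have "emeasure M B = (\<integral>\<^sup>+ y. indicator B y \<partial>M)" using Bm by simp
  also have "\<dots> = (\<integral>\<^sup>+ y. indicator B y * (\<integral>\<^sup>+ t. ennreal (f (psub p y t)) \<partial>count_space T) \<partial>M)"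
    by (rule nn_integral_cong_AE) (use AEs in auto)
  also have "\<dots> = (\<integral>\<^sup>+ y. (\<integral>\<^sup>+ t. indicator B y * ennreal (f (psub p y t)) \<partial>count_space T) \<partial>M)"
    by (rule nn_integral_cong) (simp add: nn_integral_cmult)
  also have "\<dots> = (\<integral>\<^sup>+ t. (\<integral>\<^sup>+ y. indicator B y * ennreal (f (psub p y t)) \<partial>M) \<partial>count_space T)"
    by (rule nn_integral_count_space_nn_integral[OF cT m1])
  also have "\<dots> = (\<integral>\<^sup>+ t. (\<integral>\<^sup>+ z. indicator B (padd p t z) * ennreal (f z) \<partial>M) \<partial>count_space T)"
  proof (rule nn_integral_cong)
    fix t assume "t \<in> space (count_space T)"
    then have t: "t \<in> T" by simp
    then have tQ: "t \<in> Qp p" using TQ by auto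
    have "(\<integral>\<^sup>+ y. indicator B y * ennreal (f (psub p y t)) \<partial>M) =
          (\<integral>\<^sup>+ y. indicator B y * ennreal (f (psub p y t)) \<partial>distr M M (padd p t))"
      using haar_trans(2)[OF p H tQ] by simp
    also have "\<dots> = (\<integral>\<^sup>+ z. indicator B (padd p t z) * ennreal (f (psub p (padd p t z) t)) \<partial>M)"
      by (rule nn_integral_distr[OF haar_trans(1)[OF p H tQ]]) (use m1[OF t] haar_trans(2)[OF p H tQ] in simp)
    also have "\<dots> = (\<integral>\<^sup>+ z. indicator B (padd p t z) * ennreal (f z) \<partial>M)"
      by (rule nn_integral_cong) (use psub_padd[OF p _ tQ] sp in simp)
    finally show "(\<integral>\<^sup>+ y. indicator B y * ennreal (f (psub p y t)) \<partial>M) = (\<integral>\<^sup>+ z. indicator B (padd p t z) * ennreal (f z) \<partial>M)" .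
  qed
  also have "\<dots> = (\<integral>\<^sup>+ z. (\<integral>\<^sup>+ t. indicator B (padd p t z) * ennreal (f z) \<partial>count_space T) \<partial>M)"
    by (rule nn_integral_count_space_nn_integral[OF cT m2, symmetric])
  also have "\<dots> = (\<integral>\<^sup>+ z. ennreal (f z) * of_nat (card (cyl p L (psub p x z L) \<inter> T)) \<partial>M)"
  proof (rule nn_integral_cong)
    fix z assume "z \<in> space M"
    then have zQ: "z \<in> Qp p" using sp by simp
    define A where "A = cyl p L (psub p x z L) \<inter> T"
    have AT: "A \<subseteq> T" unfolding A_def by blast
    have finA: "finite A" unfolding A_def using lf compact_cyl[OF p, of L "psub p x z L"] unfolding locally_finite_def by blast
    have ind: "indicator B (padd p t z) = (indicator A t :: ennreal)" if t: "t \<in> T" for t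
    proof -
      have tQ: "t \<in> Qp p" using t TQ by auto
      have "padd p t z \<in> B \<longleftrightarrow> pmod p L (t L + z L) = x L"
        using padd_Qp[OF p tQ zQ] unfolding B_def cyl_def padd_def by simp
      also have "\<dots> \<longleftrightarrow> cng p L (t L + z L) (x L)" by (rule pmod_eq_cng[OF p QpD(1,2)[OF x]])
      also have "\<dots> \<longleftrightarrow> cng p L (t L) (x L - z L)" unfolding cng_def by (simp add: algebra_simps)
      also have "\<dots> \<longleftrightarrow> cng p L (t L) (psub p x z L)"
        using psub_cng[OF p, of L x z] by (meson cng_sym cng_trans)
      also have "\<dots> \<longleftrightarrow> t L = psub p x z L"
        using cng_range_eq[OF p _ QpD(1,2)[OF tQ] QpD(1,2)[OF psub_Qp[OF p x zQ]]] by auto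
      also have "\<dots> \<longleftrightarrow> t \<in> A" unfolding A_def cyl_def using t tQ by auto
      finally show ?thesis by (simp add: indicator_def)
    qed
    have "(\<integral>\<^sup>+ t. indicator B (padd p t z) * ennreal (f z) \<partial>count_space T) = (\<integral>\<^sup>+ t. ennreal (f z) * indicator A t \<partial>count_space T)"
      by (rule nn_integral_cong) (simp add: ind mult.commute)
    also have "\<dots> = ennreal (f z) * emeasure (count_space T) A"
      by (rule nn_integral_cmult_indicator) (use AT in simp)
    also have "\<dots> = ennreal (f z) * of_nat (card A)" using AT finA by simp
    finally show "(\<integral>\<^sup>+ t. indicator B (padd p t z) * ennreal (f z) \<partial>count_space T) = ennreal (f z) * of_nat (card (cyl p L (psub p x z L) \<inter> T))"
      unfolding A_def .
  qed
  finally show ?thesis unfolding B_def .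
qed

lemma Zp_cyl: "p \<ge> 2 \<Longrightarrow> Zp p = cyl p 0 0"
  unfolding Zp_def cyl_def using pabs_le_iff[of p _ 0] by auto

lemma backward:
  assumes p: "p \<ge> 2" and TQ: "T \<subseteq> Qp p" and Tne: "T \<noteq> {}" and lf: "locally_finite p T"
    and cst: "\<forall>x\<in>Qp p. \<forall>y\<in>Qp p. card (pball p x n \<inter> T) = card (pball p y n \<inter> T)"
  shows "uniform_partition_of_unity p T"
proof -
  define M where "M = haar p"
  have H: "is_haar p M" unfolding M_def by (rule haar_is[OF p])
  note sp = haar_facts(1)[OF H]
  define c where "c = card (pball p pzero n \<inter> T)"
  have cx: "\<And>x. x \<in> Qp p \<Longrightarrow> card (pball p x n \<inter> T) = c" unfolding c_def using cst pzero_Qp[OF p] by blast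
  obtain t0 where t0: "t0 \<in> T" using Tne by blast
  have t0Q: "t0 \<in> Qp p" using t0 TQ by auto
  have "t0 \<in> pball p t0 n \<inter> T" using t0 t0Q unfolding pball_cyl[OF p t0Q] by (simp add: cyl_def)
  moreover have "finite (pball p t0 n \<inter> T)" by (rule finite_pball_T[OF p t0Q lf])
  ultimately have "card (pball p t0 n \<inter> T) \<ge> 1" by (metis One_nat_def Suc_leI card_gt_0_iff empty_iff)
  then have c1: "c \<ge> 1" using cx[OF t0Q] by simp
  define B where "B = cyl p (- n) 0"
  have Bm: "B \<in> sets M" unfolding B_def by (rule haar_cyl[OF p H])
  have Bfin: "emeasure M B < \<infinity>" unfolding B_def by (rule haar_facts(4)[OF H compact_cyl[OF p]])
  define f where "f z = indicator B z / real c" for z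
  have "integrable M (indicator B :: _ \<Rightarrow> real)"
    unfolding integrable_indicator_iff using Bm Bfin sets.sets_into_space[OF Bm] by (simp add: Int_absorb2)
  then have fi: "integrable M f" unfolding f_def by (rule integrable_divide_zero)
  have fnn: "\<forall>x\<in>Qp p. 0 \<le> f x" unfolding f_def by simp
  have "AE x in M. ((\<lambda>t. f (psub p x t)) has_sum 1) T"
  proof (rule AE_I2)
    fix x assume "x \<in> space M"
    then have xQ: "x \<in> Qp p" using sp by simp
    define S where "S = pball p x n \<inter> T"
    have finS: "finite S" unfolding S_def by (rule finite_pball_T[OF p xQ lf])
    have inB: "psub p x t \<in> B \<longleftrightarrow> t \<in> S" if t: "t \<in> T" for t
    proof -
      have tQ: "t \<in> Qp p" using t TQ by auto
      have "psub p x t \<in> B \<longleftrightarrow> x (- n) = t (- n)"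
        unfolding B_def cyl_def using psub_Qp[OF p xQ tQ] psub_zero_iff[OF p xQ tQ] by simp
      also have "\<dots> \<longleftrightarrow> t \<in> S" unfolding S_def pball_cyl[OF p xQ] cyl_def using t tQ by auto
      finally show ?thesis .
    qed
    show "((\<lambda>t. f (psub p x t)) has_sum 1) T"
    proof (rule has_sum_finite_neutralI[OF finS])
      show "S \<subseteq> T" unfolding S_def by blast
      show "\<And>t. t \<in> T - S \<Longrightarrow> f (psub p x t) = 0" unfolding f_def using inB by simp
      have "(\<Sum>t\<in>S. f (psub p x t)) = (\<Sum>t\<in>S. 1 / real c)"
        by (rule sum.cong[OF refl]) (use inB S_def in \<open>auto simp: f_def\<close>)
      also have "\<dots> = real (card S) / real c" by simp
      also have "\<dots> = 1" unfolding S_def using cx[OF xQ] c1 by simp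
      finally show "1 = (\<Sum>t\<in>S. f (psub p x t))" by simp
    qed
  qed
  then show ?thesis unfolding uniform_partition_of_unity_def M_def[symmetric] using fi fnn by blast
qed

lemma forward:
  assumes p: "p \<ge> 2" and TQ: "T \<subseteq> Qp p" and Tne: "T \<noteq> {}" and lf: "locally_finite p T"
    and upu: "uniform_partition_of_unity p T"
  shows "\<exists>n::int. \<forall>x\<in>Qp p. \<forall>y\<in>Qp p. card (pball p x n \<inter> T) = card (pball p y n \<inter> T)"
proof -
  define M where "M = haar p"
  have H: "is_haar p M" unfolding M_def by (rule haar_is[OF p])
  note sp = haar_facts(1)[OF H]
  obtain f :: "(int \<Rightarrow> rat) \<Rightarrow> real" where fall0: "integrable (haar p) f \<and> (\<forall>x\<in>Qp p. 0 \<le> f x) \<and> (AE x in haar p. ((\<lambda>t. f (psub p x t)) has_sum 1) T)"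
    using upu unfolding uniform_partition_of_unity_def by (elim exE) (erule that)
  have fall: "integrable M f \<and> (\<forall>x\<in>Qp p. 0 \<le> f x) \<and> (AE x in M. ((\<lambda>t. f (psub p x t)) has_sum 1) T)"
    unfolding M_def by (rule fall0)
  have fi: "integrable M f" using fall by (rule conjunct1)
  have fnn: "\<forall>x\<in>Qp p. 0 \<le> f x" using fall by simp
  have ae: "AE x in M. ((\<lambda>t. f (psub p x t)) has_sum 1) T" using fall by (elim conjE)
  have fm: "f \<in> borel_measurable M" using fi by blast
  have gm: "(\<lambda>z. ennreal (f z)) \<in> borel_measurable M" using fm by measurable
  have cT: "countable T" by (rule countable_T[OF p TQ lf])
  have AEs: "AE y in M. (\<integral>\<^sup>+ t. ennreal (f (psub p y t)) \<partial>count_space T) = 1"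
    using ae AE_space
  proof eventually_elim
    case (elim y)
    then have yQ: "y \<in> Qp p" using sp by simp
    have "(\<integral>\<^sup>+ t. ennreal (f (psub p y t)) \<partial>count_space T) = ennreal 1"
      by (rule hs_nn[OF cT _ elim(1)]) (use fnn psub_Qp[OF p yQ] TQ in blast)
    then show ?case by simp
  qed
  define cnt where "cnt L w = card (cyl p L (w L) \<inter> T)" for L w
  have KEY: "emeasure M (cyl p L (x L)) = (\<integral>\<^sup>+ z. ennreal (f z) * of_nat (cnt L (psub p x z)) \<partial>M)"
    if x: "x \<in> Qp p" for x L
    unfolding cnt_def by (rule key[OF p H TQ lf fm _ AEs x]) (use fnn in blast)
  define I where "I = (\<integral>\<^sup>+ z. ennreal (f z) \<partial>M)"
  have Ifin: "I \<noteq> \<infinity>" unfolding I_def using fi by blast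
  have Ipos: "I \<noteq> 0"
  proof
    assume "I = 0"
    then have "AE z in M. ennreal (f z) = 0" unfolding I_def using nn_integral_0_iff_AE[OF gm] by simp
    then have "(\<integral>\<^sup>+ z. ennreal (f z) * of_nat (cnt 0 (psub p pzero z)) \<partial>M) = (\<integral>\<^sup>+ z. 0 \<partial>M)"
      by (intro nn_integral_cong_AE) auto
    then have "emeasure M (cyl p 0 (pzero 0)) = 0" using KEY[OF pzero_Qp[OF p], of 0] by simp
    moreover have "cyl p 0 (pzero 0) = Zp p" using Zp_cyl[OF p] by (simp add: pzero_def)
    ultimately show False using haar_facts(5)[OF H] by simp
  qed
  define Bk where "Bk k = cyl p (- int k) 0" for k :: nat
  have Bkm: "\<And>k. Bk k \<in> sets M" unfolding Bk_def by (rule haar_cyl[OF p H])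
  have Bk_mono: "Bk k \<subseteq> Bk (Suc k)" for k
  proof
    fix z assume "z \<in> Bk k"
    then have zQ: "z \<in> Qp p" and z0: "z (- int k) = 0" unfolding Bk_def cyl_def by auto
    have "z (- int (Suc k)) = pzero (- int (Suc k))"
      by (rule agree_down[OF p zQ pzero_Qp[OF p], of _ "- int k"]) (use z0 in \<open>auto simp: pzero_def\<close>)
    then show "z \<in> Bk (Suc k)" unfolding Bk_def cyl_def using zQ by (simp add: pzero_def)
  qed
  define a where "a k = (\<integral>\<^sup>+ z. ennreal (f z) * indicator (Bk k) z \<partial>M)" for k
  have mB: "\<And>S. S \<in> sets M \<Longrightarrow> (\<lambda>z. ennreal (f z) * indicator S z) \<in> borel_measurable M"
    by (rule borel_measurable_times_ennreal[OF gm borel_measurable_indicator])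
  have mBc: "\<And>S c. S \<in> sets M \<Longrightarrow> (\<lambda>z. ennreal (f z) * indicator S z * c) \<in> borel_measurable M"
    by (rule borel_measurable_times_ennreal[OF mB]) simp_all
  have SUPa: "(SUP k. a k) = I"
  proof -
    have inc: "incseq (\<lambda>k z. ennreal (f z) * indicator (Bk k) z)"
    proof (rule incseq_SucI, rule le_funI)
      fix k z show "ennreal (f z) * indicator (Bk k) z \<le> ennreal (f z) * indicator (Bk (Suc k)) z"
        using Bk_mono[of k] by (intro mult_left_mono) (auto simp: indicator_def)
    qed
    have "(SUP k. a k) = (\<integral>\<^sup>+ z. (SUP k. ennreal (f z) * indicator (Bk k) z) \<partial>M)"
      unfolding a_def by (rule nn_integral_monotone_convergence_SUP[symmetric, OF inc]) (rule mB[OF Bkm])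
    also have "\<dots> = I" unfolding I_def
    proof (rule nn_integral_cong)
      fix z assume "z \<in> space M"
      then have zQ: "z \<in> Qp p" using sp by simp
      obtain K where K: "\<forall>k\<le>K. z k = 0" using QpD(4)[OF zQ] by blast
      have "z \<in> Bk (nat (- K))" unfolding Bk_def cyl_def using K zQ by simp
      then have "ennreal (f z) \<le> (SUP k. ennreal (f z) * indicator (Bk k) z)"
        by (intro SUP_upper2[of "nat (- K)"]) auto
      moreover have "(SUP k. ennreal (f z) * indicator (Bk k) z) \<le> ennreal (f z)"
        by (intro SUP_least) (auto simp: indicator_def)
      ultimately show "(SUP k. ennreal (f z) * indicator (Bk k) z) = ennreal (f z)" by (rule antisym[rotated])
    qed
    finally show ?thesis .
  qed
  obtain Ir where Ir: "I = ennreal Ir" "Ir \<ge> 0" using Ifin by (cases I) auto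
  have Irpos: "Ir > 0" using Ipos Ir by (cases "Ir > 0") auto
  have "ennreal (Ir / 2) < (SUP k. a k)" unfolding SUPa Ir(1) using Irpos by (intro ennreal_lessI) auto
  then obtain k where k: "ennreal (Ir / 2) < a k" by (auto simp: less_SUP_iff)
  define L where "L = - int k"
  define B0 where "B0 = Bk k"
  have B0m: "B0 \<in> sets M" unfolding B0_def by (rule Bkm)
  have B0L: "B0 = cyl p L 0" unfolding B0_def Bk_def L_def ..
  define b where "b = (\<integral>\<^sup>+ z. ennreal (f z) * indicator (space M - B0) z \<partial>M)"
  have Iab: "I = a k + b"
  proof -
    have "I = (\<integral>\<^sup>+ z. ennreal (f z) * indicator B0 z + ennreal (f z) * indicator (space M - B0) z \<partial>M)"
      unfolding I_def by (rule nn_integral_cong) (auto simp: indicator_def)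
    also have "\<dots> = a k + b" unfolding a_def b_def B0_def
      by (rule nn_integral_add) (rule mB, use Bkm in \<open>auto intro: sets.Diff\<close>)+
    finally show ?thesis .
  qed
  obtain ar where ar: "a k = ennreal ar" "ar \<ge> 0" using Iab Ifin by (cases "a k") auto
  obtain br where br: "b = ennreal br" "br \<ge> 0" using Iab Ifin by (cases b) auto
  have Irab: "Ir = ar + br" using Iab Ir ar br by (simp flip: ennreal_plus)
  have "Ir / 2 < ar" using k ar Irab br(2) by (simp add: ennreal_less_iff)
  then have arbr: "ar > br" using Irab by linarith
  define V where "V = emeasure M B0"
  have Vx: "emeasure M (cyl p L (x L)) = V" if x: "x \<in> Qp p" for x
    unfolding V_def B0L using haar_facts(3)[OF H x, of "cyl p L 0"] cyl_trans[OF p x, of L] haar_cyl[OF p H] by simp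
  have Vfin: "V < \<infinity>" unfolding V_def B0L by (rule haar_facts(4)[OF H compact_cyl[OF p]])
  obtain Vr where Vr: "V = ennreal Vr" "Vr \<ge> 0" using Vfin by (cases V) auto
  have cnt_eq: "cnt L (psub p x z) = cnt L x" if x: "x \<in> Qp p" and z: "z \<in> B0" for x z
  proof -
    have zQ: "z \<in> Qp p" and zL: "z L = 0" using z unfolding B0L cyl_def by auto
    have "cng p L (psub p x z L) (x L - z L)" by (rule psub_cng[OF p])
    then have "psub p x z L = x L"
      using zL cng_range_eq[OF p _ QpD(1,2)[OF psub_Qp[OF p x zQ]] QpD(1,2)[OF x]] by simp
    then show ?thesis unfolding cnt_def by simp
  qed
  have lower: "of_nat (cnt L x) * a k \<le> V" if x: "x \<in> Qp p" for x
  proof -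
    have "of_nat (cnt L x) * a k = a k * of_nat (cnt L x)" by (simp add: mult.commute)
    also have "\<dots> = (\<integral>\<^sup>+ z. ennreal (f z) * indicator B0 z * of_nat (cnt L x) \<partial>M)"
      unfolding a_def B0_def by (rule nn_integral_multc[symmetric, OF mB[OF Bkm]])
    also have "\<dots> \<le> (\<integral>\<^sup>+ z. ennreal (f z) * of_nat (cnt L (psub p x z)) \<partial>M)"
      by (rule nn_integral_mono) (auto simp: indicator_def cnt_eq[OF x])
    also have "\<dots> = V" using KEY[OF x] Vx[OF x] by simp
    finally show ?thesis .
  qed
  have bnd: "real (cnt L x) \<le> Vr / ar" if x: "x \<in> Qp p" for x
  proof -
    have "ennreal (real (cnt L x) * ar) \<le> ennreal Vr"
      using lower[OF x] ar Vr by (simp add: ennreal_of_nat_eq_real_of_nat ennreal_mult)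
    then have "real (cnt L x) * ar \<le> Vr" using Vr by simp
    moreover have "ar > 0" using arbr br by simp
    ultimately show ?thesis by (simp add: pos_le_divide_eq)
  qed
  define C where "C = (\<lambda>x. cnt L x) ` Qp p"
  have finC: "finite C"
  proof (rule finite_subset[of _ "{..nat \<lceil>Vr / ar\<rceil>}"])
    show "C \<subseteq> {..nat \<lceil>Vr / ar\<rceil>}"
    proof
      fix c assume "c \<in> C"
      then obtain x where x: "x \<in> Qp p" "c = cnt L x" unfolding C_def by blast
      have "real c \<le> Vr / ar" using bnd[OF x(1)] x(2) by simp
      then have "real c \<le> real (nat \<lceil>Vr / ar\<rceil>)" by linarith
      then show "c \<in> {..nat \<lceil>Vr / ar\<rceil>}" by simp
    qed
  qed simp
  have neC: "C \<noteq> {}" unfolding C_def using pzero_Qp[OF p] by blast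
  define Mx where "Mx = Max C"
  define mn where "mn = Min C"
  obtain x1 where x1: "x1 \<in> Qp p" "cnt L x1 = Mx" using Max_in[OF finC neC] unfolding Mx_def C_def by auto
  obtain x2 where x2: "x2 \<in> Qp p" "cnt L x2 = mn" using Min_in[OF finC neC] unfolding mn_def C_def by auto
  have inC: "\<And>w. w \<in> Qp p \<Longrightarrow> mn \<le> cnt L w \<and> cnt L w \<le> Mx"
    unfolding Mx_def mn_def C_def using finC C_def by auto
  have split: "(\<integral>\<^sup>+ z. ennreal (f z) * indicator B0 z * of_nat u + ennreal (f z) * indicator (space M - B0) z * of_nat v \<partial>M)
      = of_nat u * a k + of_nat v * b" for u v :: nat
  proof -
    have "(\<integral>\<^sup>+ z. ennreal (f z) * indicator B0 z * of_nat u + ennreal (f z) * indicator (space M - B0) z * of_nat v \<partial>M)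
        = (\<integral>\<^sup>+ z. ennreal (f z) * indicator B0 z * of_nat u \<partial>M) + (\<integral>\<^sup>+ z. ennreal (f z) * indicator (space M - B0) z * of_nat v \<partial>M)"
      by (rule nn_integral_add) (rule mBc, use B0m in \<open>auto intro: sets.Diff\<close>)+
    also have "\<dots> = a k * of_nat u + b * of_nat v" unfolding a_def b_def B0_def
      using nn_integral_multc[OF mB[OF Bkm[of k]], of "of_nat u"] nn_integral_multc[OF mB[of "space M - Bk k"], of "of_nat v"] Bkm
      by (simp add: sets.Diff)
    finally show ?thesis by (simp add: mult.commute)
  qed
  have up: "of_nat Mx * a k + of_nat mn * b \<le> V"
  proof -
    have "of_nat Mx * a k + of_nat mn * b \<le> (\<integral>\<^sup>+ z. ennreal (f z) * of_nat (cnt L (psub p x1 z)) \<partial>M)"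
      unfolding split[symmetric]
    proof (rule nn_integral_mono)
      fix z assume "z \<in> space M"
      then have zQ: "z \<in> Qp p" using sp by simp
      show "ennreal (f z) * indicator B0 z * of_nat Mx + ennreal (f z) * indicator (space M - B0) z * of_nat mn
          \<le> ennreal (f z) * of_nat (cnt L (psub p x1 z))"
      proof (cases "z \<in> B0")
        case True then show ?thesis using cnt_eq[OF x1(1) True] x1(2) by (simp add: indicator_def)
      next
        case False
        have "mn \<le> cnt L (psub p x1 z)" using inC[OF psub_Qp[OF p x1(1) zQ]] by simp
        then show ?thesis using False zQ sp by (auto simp: indicator_def intro!: mult_left_mono)
      qed
    qed
    also have "\<dots> = V" using KEY[OF x1(1)] Vx[OF x1(1)] by simp
    finally show ?thesis .
  qed
  have lo: "V \<le> of_nat mn * a k + of_nat Mx * b"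
  proof -
    have "V = (\<integral>\<^sup>+ z. ennreal (f z) * of_nat (cnt L (psub p x2 z)) \<partial>M)" using KEY[OF x2(1)] Vx[OF x2(1)] by simp
    also have "\<dots> \<le> of_nat mn * a k + of_nat Mx * b"
      unfolding split[symmetric]
    proof (rule nn_integral_mono)
      fix z assume "z \<in> space M"
      then have zQ: "z \<in> Qp p" using sp by simp
      show "ennreal (f z) * of_nat (cnt L (psub p x2 z))
          \<le> ennreal (f z) * indicator B0 z * of_nat mn + ennreal (f z) * indicator (space M - B0) z * of_nat Mx"
      proof (cases "z \<in> B0")
        case True then show ?thesis using cnt_eq[OF x2(1) True] x2(2) by (simp add: indicator_def)
      next
        case False
        have "cnt L (psub p x2 z) \<le> Mx" using inC[OF psub_Qp[OF p x2(1) zQ]] by simp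
        then show ?thesis using False zQ sp by (auto simp: indicator_def intro!: mult_left_mono)
      qed
    qed
    finally show ?thesis .
  qed
  have e1: "of_nat Mx * a k + of_nat mn * b = ennreal (real Mx * ar + real mn * br)"
    using ar br by (simp add: ennreal_of_nat_eq_real_of_nat ennreal_mult)
  have e2: "of_nat mn * a k + of_nat Mx * b = ennreal (real mn * ar + real Mx * br)"
    using ar br by (simp add: ennreal_of_nat_eq_real_of_nat ennreal_mult)
  have "ennreal (real Mx * ar + real mn * br) \<le> ennreal (real mn * ar + real Mx * br)"
    using order.trans[OF up lo] unfolding e1 e2 .
  moreover have nnr: "0 \<le> real mn * ar + real Mx * br" using ar br by simp
  ultimately have ineq: "real Mx * ar + real mn * br \<le> real mn * ar + real Mx * br"
    using ennreal_le_iff[OF nnr] by blast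
  have "Mx \<le> mn"
  proof (rule ccontr)
    assume "\<not> Mx \<le> mn"
    then have "real Mx - real mn > 0" by simp
    then have "(real Mx - real mn) * (ar - br) > 0" using arbr by simp
    then show False using ineq by (simp add: algebra_simps)
  qed
  then have allc: "\<And>w. w \<in> Qp p \<Longrightarrow> cnt L w = Mx" using inC by (metis le_antisym order.trans)
  show ?thesis
  proof (intro exI[of _ "- L"] ballI)
    fix x y assume x: "x \<in> Qp p" and y: "y \<in> Qp p"
    show "card (pball p x (- L) \<inter> T) = card (pball p y (- L) \<inter> T)"
      unfolding pball_cyl[OF p x] pball_cyl[OF p y] using allc[OF x] allc[OF y] unfolding cnt_def by simp
  qed
qed

theorem theorem1p2:
  fixes p :: nat and T :: "(int \<Rightarrow> rat) set"
  assumes "prime p"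
    and "T \<subseteq> Qp p" and "T \<noteq> {}"
    and "locally_finite p T"
  shows "uniform_partition_of_unity p T \<longleftrightarrow>
         (\<exists>n::int. \<forall>x\<in>Qp p. \<forall>y\<in>Qp p. card (pball p x n \<inter> T) = card (pball p y n \<inter> T))"
proof -
  have p: "p \<ge> 2" using assms(1) by (rule prime_ge_2_nat)
  show ?thesis
  proof
    assume upu: "uniform_partition_of_unity p T"
    show "\<exists>n::int. \<forall>x\<in>Qp p. \<forall>y\<in>Qp p. card (pball p x n \<inter> T) = card (pball p y n \<inter> T)"
      by (rule forward[OF p assms(2,3,4) upu])
  next
    assume "\<exists>n::int. \<forall>x\<in>Qp p. \<forall>y\<in>Qp p. card (pball p x n \<inter> T) = card (pball p y n \<inter> T)"
    then obtain n :: int where cst: "\<forall>x\<in>Qp p. \<forall>y\<in>Qp p. card (pball p x n \<inter> T) = card (pball p y n \<inter> T)"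
      by blast
    show "uniform_partition_of_unity p T" by (rule backward[OF p assms(2,3,4) cst])
  qed
qed

end
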